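(* $\mathcal{M}_1$ equals the weak*-closed convex hull of $\mathcal{Q}_1$.
   Context: $L^{\infty}(\mathbb{R}_+)$: real-valued essentially bounded measurable functions on $[0,\infty)$. $\mathcal{M}_1$ is the set of positive linear functionals $\varphi$ on $L^{\infty}(\mathbb{R}_+)$ with $\varphi(1)=1$ and $\varphi(f)\le\lim_{\theta\to\infty}\limsup_{x\to\infty}\frac1\theta\int_x^{x+\theta}f(t)\,dt$ for all $f$. Let $\beta\mathbb{N}_0$ be the Stone–Čech compactification of $\mathbb{N}_0$ (points = ultrafilters), $\tau$ the extension of $n\mapsto n+1$, $\Omega=(\beta\mathbb{N}_0\times[0,1])/\sim$ with $(\tau\eta,0)\sim(\eta,1)$, containing $\mathbb{R}_+$ via $(n,t)\mapsto n+t$, and $\Omega^*=\Omega\setminus\mathbb{R}_+$ with flow $\tau^s(\eta,t)=(\tau^{[t+s]}\eta,t+s-[t+s])$. Each $\omega=(\eta,t)$ is identified with the ultrafilter $\{A+t:A\in\eta\}$ on $\mathbb{R}_+$. For $f\in L^{\infty}(\mathbb{R}_+)$, $f_s(x)=f(x+s)$ and $f_\omega=\omega\text{-}\lim_sf_s$ (weak* limit in $L^{\infty}(\mathbb{R}_+)=L^1(\mathbb{R}_+)^*$ along $\omega$), extended to $\mathbb{R}$ by $f_\omega(x)=f_{\tau^{-N}\omega}(N+x)$ for $x\in[-N,0]$. $\mathcal{Q}_1$ is the set of all functionals $f\mapsto\mathcal{U}\text{-}\lim_x\frac1x\int_0^xf_\omega(t)\,dt$ on $L^{\infty}(\mathbb{R}_+)$,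 where $\omega\in\Omega^*$ and $\mathcal{U}$ is an ultrafilter on $\mathbb{R}_+$ containing no bounded set. *)

theory Defs
  imports "HOL-Analysis.Analysis"
begin

text \<open>Elements of L-infinity of the half line are represented by functions real => real;
  only their values on [0,inf) matter (up to Lebesgue-null sets).\<close>
definition Linf :: "(real \<Rightarrow> real) set" where
  "Linf = {f. set_borel_measurable lebesgue {0..} f \<and>
              (\<exists>C. AE x in lebesgue. x \<ge> 0 \<longrightarrow> \<bar>f x\<bar> \<le> C)}"

definition ultrafilter :: "'a filter \<Rightarrow> bool" where
  "ultrafilter F \<longleftrightarrow> F \<noteq> bot \<and> (\<forall>P. eventually P F \<or> eventually (\<lambda>x. \<not> P x) F)"

definition upper_mean :: "(real \<Rightarrow> real) \<Rightarrow> ereal" where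
  "upper_mean f = Lim at_top (\<lambda>\<theta>::real. Limsup at_top
      (\<lambda>x::real. ereal ((1 / \<theta>) * (LINT t:{x..x+\<theta>}|lebesgue. f t))))"

text \<open>The set M_1.  Functionals are maps on representatives; they are required to vanish
  off Linf (a canonical normalisation), be linear and positive on Linf.\<close>
definition M1 :: "((real \<Rightarrow> real) \<Rightarrow> real) set" where
  "M1 = {\<phi>. (\<forall>f. f \<notin> Linf \<longrightarrow> \<phi> f = 0)
          \<and> (\<forall>f\<in>Linf. \<forall>g\<in>Linf. \<phi> (\<lambda>x. f x + g x) = \<phi> f + \<phi> g)
          \<and> (\<forall>f\<in>Linf. \<forall>c::real. \<phi> (\<lambda>x. c * f x) = c * \<phi> f)
          \<and> (\<forall>f\<in>Linf. (AE x in lebesgue. x \<ge> 0 \<longrightarrow> f x \<ge> 0) \<longrightarrow> \<phi> f \<ge> 0)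
          \<and> \<phi> (\<lambda>_. 1) = 1
          \<and> (\<forall>f\<in>Linf. ereal (\<phi> f) \<le> upper_mean f)}"

text \<open>The point omega = (eta, t) of Omega*, viewed as the ultrafilter {A + t : A in eta}
  on the half line, i.e. the image of eta under n |-> n + t.\<close>
definition omega_filter :: "nat filter \<Rightarrow> real \<Rightarrow> real filter" where
  "omega_filter \<eta> t = filtermap (\<lambda>n. real n + t) \<eta>"

text \<open>h is the weak* limit (in L-infinity = dual of L^1 of the half line) of the
  translates f_s along the filter F.\<close>
definition weak_star_lim :: "real filter \<Rightarrow> (real \<Rightarrow> real) \<Rightarrow> (real \<Rightarrow> real) \<Rightarrow> bool" where
  "weak_star_lim F f h \<longleftrightarrow> h \<in> Linf \<and>
     (\<forall>g. set_integrable lebesgue {0..} g \<longrightarrow>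
        ((\<lambda>s. LINT y:{0..}|lebesgue. f (y + s) * g y) \<longlongrightarrow>
           (LINT y:{0..}|lebesgue. h y * g y)) F)"

definition f_omega :: "nat filter \<Rightarrow> real \<Rightarrow> (real \<Rightarrow> real) \<Rightarrow> (real \<Rightarrow> real)" where
  "f_omega \<eta> t f = (SOME h. weak_star_lim (omega_filter \<eta> t) f h)"

definition qfun :: "nat filter \<Rightarrow> real \<Rightarrow> real filter \<Rightarrow> (real \<Rightarrow> real) \<Rightarrow> real" where
  "qfun \<eta> t U f = (if f \<in> Linf then
      Lim U (\<lambda>x. (1 / x) * (LINT s:{0..x}|lebesgue. f_omega \<eta> t f s)) else 0)"

text \<open>Omega* = points (eta, t) with eta a free ultrafilter on N_0 and t in [0,1);
  U ranges over ultrafilters on the half line containing no bounded set (i.e. U <= at_top).\<close>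
definition Q1 :: "((real \<Rightarrow> real) \<Rightarrow> real) set" where
  "Q1 = {qfun \<eta> t U | \<eta> t U. ultrafilter \<eta> \<and> \<eta> \<le> sequentially \<and> 0 \<le> t \<and> t < 1
                          \<and> ultrafilter U \<and> U \<le> at_top}"

definition conv_comb :: "((real \<Rightarrow> real) \<Rightarrow> real) set \<Rightarrow> ((real \<Rightarrow> real) \<Rightarrow> real) set" where
  "conv_comb S = {(\<lambda>f. \<Sum>i<n. c i * \<phi>s i f) | (n::nat) c \<phi>s.
       (\<forall>i<n. 0 \<le> c i \<and> \<phi>s i \<in> S) \<and> (\<Sum>i<n. c i) = 1}"

text \<open>Weak* closure (topology of pointwise convergence on Linf), among functionals
  normalised to vanish off Linf.\<close>
definition wstar_closure :: "((real \<Rightarrow> real) \<Rightarrow> real) set \<Rightarrow> ((real \<Rightarrow> real) \<Rightarrow> real) set" where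
  "wstar_closure S = {\<psi>. (\<forall>f. f \<notin> Linf \<longrightarrow> \<psi> f = 0) \<and>
      (\<forall>F. finite F \<and> F \<subseteq> Linf \<longrightarrow> (\<forall>\<epsilon>>0. \<exists>\<phi>\<in>S. \<forall>f\<in>F. \<bar>\<phi> f - \<psi> f\<bar> < \<epsilon>))}"

end

theory Submission
  imports Defs
begin

lemma ultrafilter_filtermap:
  assumes "ultrafilter F" shows "ultrafilter (filtermap h F)"
  using assms unfolding ultrafilter_def by (auto simp: eventually_filtermap filtermap_bot_iff)

lemma ultrafilter_le_nhds:
  assumes "ultrafilter F" "inf (nhds x) F \<noteq> bot"
  shows "F \<le> nhds x"
proof (rule filter_leI)
  fix P assume "eventually P (nhds x)"
  show "eventually P F"
  proof (rule ccontr)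
    assume "\<not> eventually P F"
    then have "eventually (\<lambda>y. \<not> P y) F" using assms(1) unfolding ultrafilter_def by blast
    with \<open>eventually P (nhds x)\<close> have "eventually (\<lambda>y. False) (inf (nhds x) F)"
      unfolding eventually_inf by blast
    then show False using assms(2) by (simp add: eventually_False)
  qed
qed

lemma ultrafilter_converges:
  fixes g :: "'a \<Rightarrow> real"
  assumes "ultrafilter F" "eventually (\<lambda>x. g x \<in> {a..b}) F"
  shows "\<exists>L\<in>{a..b}. (g \<longlongrightarrow> L) F"
proof -
  have F: "filtermap g F \<noteq> bot" using assms(1) unfolding ultrafilter_def by (simp add: filtermap_bot_iff)
  have "eventually (\<lambda>x. x \<in> {a..b}) (filtermap g F)" using assms(2) by (simp add: eventually_filtermap)
  then obtain L where L: "L \<in> {a..b}" "inf (nhds L) (filtermap g F) \<noteq> bot"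
    using compact_Icc[of a b] F unfolding compact_filter by blast
  have "filtermap g F \<le> nhds L"
    by (rule ultrafilter_le_nhds[OF ultrafilter_filtermap[OF assms(1)] L(2)])
  then show ?thesis using L(1) unfolding filterlim_def by blast
qed

definition pfilt :: "'a set set \<Rightarrow> bool" where
  "pfilt S \<longleftrightarrow> UNIV \<in> S \<and> {} \<notin> S \<and> (\<forall>A\<in>S. \<forall>B\<in>S. A \<inter> B \<in> S) \<and> (\<forall>A\<in>S. \<forall>B. A \<subseteq> B \<longrightarrow> B \<in> S)"

lemma ultrafilter_exists:
  fixes F :: "'a filter"
  assumes "F \<noteq> bot"
  shows "\<exists>U. ultrafilter U \<and> U \<le> F"
proof -
  define E where "E = {A. eventually (\<lambda>x. x \<in> A) F}"
  have pE: "pfilt E" unfolding pfilt_def E_def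
  proof (intro conjI ballI allI impI)
    show "UNIV \<in> {A. eventually (\<lambda>x. x \<in> A) F}" by simp
    show "{} \<notin> {A. eventually (\<lambda>x. x \<in> A) F}" using assms by simp
  next
    fix A B assume "A \<in> {A. eventually (\<lambda>x. x \<in> A) F}" "B \<in> {A. eventually (\<lambda>x. x \<in> A) F}"
    then show "A \<inter> B \<in> {A. eventually (\<lambda>x. x \<in> A) F}" by (simp add: eventually_conj)
  next
    fix A B assume "A \<in> {A. eventually (\<lambda>x. x \<in> A) F}" "A \<subseteq> B"
    then show "B \<in> {A. eventually (\<lambda>x. x \<in> A) F}" by (auto elim: eventually_mono)
  qed
  define Z where "Z = {S. pfilt S \<and> E \<subseteq> S}"
  have "\<exists>M\<in>Z. \<forall>X\<in>Z. M \<subseteq> X \<longrightarrow> X = M"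
  proof (rule Zorn_Lemma2, intro ballI)
    fix C assume C: "C \<in> chains Z"
    show "\<exists>U\<in>Z. \<forall>X\<in>C. X \<subseteq> U"
    proof (cases "C = {}")
      case True then show ?thesis using pE unfolding Z_def by auto
    next
      case False
      have CZ: "C \<subseteq> Z" and ch: "\<And>X Y. X \<in> C \<Longrightarrow> Y \<in> C \<Longrightarrow> X \<subseteq> Y \<or> Y \<subseteq> X"
        using C unfolding chains_def chain_subset_def by auto
      have "pfilt (\<Union>C)"
        unfolding pfilt_def
      proof (intro conjI ballI allI impI)
        obtain X where "X \<in> C" using False by blast
        then have "pfilt X" using CZ unfolding Z_def by auto
        then show "UNIV \<in> \<Union>C" using \<open>X \<in> C\<close> unfolding pfilt_def by blast
        show "{} \<notin> \<Union>C"
        proof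
          assume "{} \<in> \<Union>C"
          then obtain Y where "Y \<in> C" "{} \<in> Y" by blast
          then have "pfilt Y" using CZ unfolding Z_def by auto
          then show False using \<open>{} \<in> Y\<close> unfolding pfilt_def by blast
        qed
      next
        fix A B assume "A \<in> \<Union>C" "B \<in> \<Union>C"
        then obtain X Y where "X \<in> C" "Y \<in> C" "A \<in> X" "B \<in> Y" by auto
        have "pfilt X" "pfilt Y" using CZ \<open>X \<in> C\<close> \<open>Y \<in> C\<close> unfolding Z_def by auto
        from ch[OF \<open>X \<in> C\<close> \<open>Y \<in> C\<close>] show "A \<inter> B \<in> \<Union>C"
        proof
          assume "X \<subseteq> Y"
          then have "A \<inter> B \<in> Y" using \<open>pfilt Y\<close> \<open>A \<in> X\<close> \<open>B \<in> Y\<close> unfolding pfilt_def by blast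
          then show ?thesis using \<open>Y \<in> C\<close> by blast
        next
          assume "Y \<subseteq> X"
          then have "A \<inter> B \<in> X" using \<open>pfilt X\<close> \<open>A \<in> X\<close> \<open>B \<in> Y\<close> unfolding pfilt_def by blast
          then show ?thesis using \<open>X \<in> C\<close> by blast
        qed
      next
        fix A B assume "A \<in> \<Union>C" "A \<subseteq> B"
        then obtain X where "X \<in> C" "A \<in> X" by auto
        then have "pfilt X" using CZ unfolding Z_def by auto
        then have "B \<in> X" using \<open>A \<in> X\<close> \<open>A \<subseteq> B\<close> unfolding pfilt_def by blast
        then show "B \<in> \<Union>C" using \<open>X \<in> C\<close> by blast
      qed
      moreover have "E \<subseteq> \<Union>C"
      proof -
        obtain X where "X \<in> C" using False by blast
        then have "E \<subseteq> X" using CZ unfolding Z_def by auto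
        then show ?thesis using \<open>X \<in> C\<close> by blast
      qed
      ultimately have "\<Union>C \<in> Z" unfolding Z_def by simp
      then show ?thesis by blast
    qed
  qed
  then obtain M where MZ: "M \<in> Z" and Mmax: "\<And>X. X \<in> Z \<Longrightarrow> M \<subseteq> X \<Longrightarrow> X = M" by blast
  have pM: "pfilt M" and EM: "E \<subseteq> M" using MZ unfolding Z_def by auto
  have isf: "is_filter (\<lambda>P. {x. P x} \<in> M)"
    unfolding is_filter_def
  proof (intro conjI allI impI)
    have "UNIV \<in> M" using pM unfolding pfilt_def by blast
    then show "{x. True} \<in> M" by simp
  next
    fix P Q assume "{x. P x} \<in> M" "{x. Q x} \<in> M"
    then have "{x. P x} \<inter> {x. Q x} \<in> M" using pM unfolding pfilt_def by blast
    then show "{x. P x \<and> Q x} \<in> M" by (simp add: Collect_conj_eq)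
  next
    fix P Q assume "\<forall>x. P x \<longrightarrow> Q x" "{x. P x} \<in> M"
    moreover have "{x. P x} \<subseteq> {x. Q x}" using \<open>\<forall>x. P x \<longrightarrow> Q x\<close> by blast
    ultimately show "{x. Q x} \<in> M" using pM unfolding pfilt_def by blast
  qed
  define U where "U = Abs_filter (\<lambda>P. {x. P x} \<in> M)"
  have evU: "eventually P U \<longleftrightarrow> {x. P x} \<in> M" for P
    unfolding U_def by (simp add: eventually_Abs_filter[OF isf])
  have "U \<noteq> bot"
  proof
    assume "U = bot"
    then have "eventually (\<lambda>x. False) U" by simp
    then have "{} \<in> M" unfolding evU by simp
    then show False using pM unfolding pfilt_def by blast
  qed
  moreover have "\<forall>P. eventually P U \<or> eventually (\<lambda>x. \<not> P x) U"
  proof (rule ccontr)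
    assume "\<not> ?thesis"
    then obtain P where nP: "{x. P x} \<notin> M" and nnP: "{x. \<not> P x} \<notin> M" unfolding evU by blast
    define M' where "M' = {B. \<exists>A\<in>M. A \<inter> {x. P x} \<subseteq> B}"
    have "pfilt M'"
      unfolding pfilt_def
    proof (intro conjI ballI allI impI)
      have "UNIV \<in> M" using pM unfolding pfilt_def by blast
      then show "UNIV \<in> M'" unfolding M'_def by blast
      show "{} \<notin> M'"
      proof
        assume "{} \<in> M'"
        then obtain A where "A \<in> M" "A \<inter> {x. P x} \<subseteq> {}" unfolding M'_def by auto
        then have "A \<subseteq> {x. \<not> P x}" by auto
        with \<open>A \<in> M\<close> pM nnP show False unfolding pfilt_def by blast
      qed
    next
      fix A B assume "A \<in> M'" "B \<in> M'"
      then obtain A' B' where "A' \<in> M" "B' \<in> M" "A' \<inter> {x. P x} \<subseteq> A" "B' \<inter> {x. P x} \<subseteq> B"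
        unfolding M'_def by auto
      moreover have "A' \<inter> B' \<in> M" using pM \<open>A' \<in> M\<close> \<open>B' \<in> M\<close> unfolding pfilt_def by blast
      ultimately show "A \<inter> B \<in> M'" unfolding M'_def by blast
    next
      fix A B assume "A \<in> M'" "A \<subseteq> B"
      then show "B \<in> M'" unfolding M'_def by blast
    qed
    moreover have "M \<subseteq> M'" unfolding M'_def by blast
    moreover have "E \<subseteq> M'" using EM \<open>M \<subseteq> M'\<close> by blast
    ultimately have "M' \<in> Z" unfolding Z_def by simp
    then have "M' = M" using Mmax \<open>M \<subseteq> M'\<close> by blast
    moreover have "{x. P x} \<in> M'"
    proof -
      have "UNIV \<in> M" using pM unfolding pfilt_def by blast
      then show ?thesis unfolding M'_def by blast
    qed
    ultimately show False using nP by simp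
  qed
  moreover have "U \<le> F"
  proof (rule filter_leI)
    fix P assume "eventually P F"
    then have "{x. P x} \<in> E" unfolding E_def by simp
    then show "eventually P U" using EM unfolding evU by blast
  qed
  ultimately show ?thesis unfolding ultrafilter_def by blast
qed


lemma Linf_bnd:
  assumes "f \<in> Linf"
  obtains C N where "C \<ge> 0" "N \<in> null_sets lborel" "\<And>x. 0 \<le> x \<Longrightarrow> x \<notin> N \<Longrightarrow> \<bar>f x\<bar> \<le> C"
proof -
  obtain C0 where "AE x in lebesgue. x \<ge> 0 \<longrightarrow> \<bar>f x\<bar> \<le> C0" using assms unfolding Linf_def by auto
  then have ae: "AE x in lborel. x \<ge> 0 \<longrightarrow> \<bar>f x\<bar> \<le> C0" by (simp add: AE_completion_iff)
  obtain N where N: "{x\<in>space lborel. \<not> (x \<ge> 0 \<longrightarrow> \<bar>f x\<bar> \<le> C0)} \<subseteq> N" "N \<in> null_sets lborel"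
    using AE_E[OF ae] null_setsI by metis
  show ?thesis
  proof (rule that[of "max C0 0" N])
    fix x :: real assume "0 \<le> x" "x \<notin> N"
    then show "\<bar>f x\<bar> \<le> max C0 0" using N(1) by force
  qed (use N in auto)
qed

lemma Linf_meas:
  assumes "f \<in> Linf" shows "(\<lambda>x. indicator {0..} x * f x) \<in> borel_measurable lebesgue"
  using assms unfolding Linf_def set_borel_measurable_def by simp

lemma AE_lebesgue_notin:
  assumes "N \<in> null_sets lborel" "\<And>x. x \<notin> N \<Longrightarrow> P x"
  shows "AE x in lebesgue. P x"
proof -
  have "AE x in lborel. P x" using assms by (auto intro: AE_I'[of N])
  then show ?thesis by (simp add: AE_completion_iff)
qed

lemma LinfI:
  assumes "(\<lambda>x. indicator {0..} x * f x) \<in> borel_measurable lebesgue"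
    and "N \<in> null_sets lborel" "\<And>x. 0 \<le> x \<Longrightarrow> x \<notin> N \<Longrightarrow> \<bar>f x\<bar> \<le> C"
  shows "f \<in> Linf"
  unfolding Linf_def set_borel_measurable_def
  using assms(1) AE_lebesgue_notin[OF assms(2), of "\<lambda>x. x \<ge> 0 \<longrightarrow> \<bar>f x\<bar> \<le> C"] assms(3)
  by auto

lemma Linf_add: "f \<in> Linf \<Longrightarrow> g \<in> Linf \<Longrightarrow> (\<lambda>x. f x + g x) \<in> Linf"
proof -
  assume f: "f \<in> Linf" and g: "g \<in> Linf"
  obtain C1 N1 where 1: "N1 \<in> null_sets lborel" "\<And>x. 0 \<le> x \<Longrightarrow> x \<notin> N1 \<Longrightarrow> \<bar>f x\<bar> \<le> C1"
    using Linf_bnd[OF f] by metis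
  obtain C2 N2 where 2: "N2 \<in> null_sets lborel" "\<And>x. 0 \<le> x \<Longrightarrow> x \<notin> N2 \<Longrightarrow> \<bar>g x\<bar> \<le> C2"
    using Linf_bnd[OF g] by metis
  have m: "(\<lambda>x. indicator {0..} x * f x + indicator {0..} x * g x) \<in> borel_measurable lebesgue"
    using Linf_meas[OF f] Linf_meas[OF g] by simp
  show ?thesis
  proof (rule LinfI[where N="N1 \<union> N2" and C="C1 + C2"])
    show "(\<lambda>x. indicator {0..} x * (f x + g x)) \<in> borel_measurable lebesgue"
      using m by (simp add: distrib_left)
    show "N1 \<union> N2 \<in> null_sets lborel" using 1 2 by auto
    fix x :: real assume "0 \<le> x" "x \<notin> N1 \<union> N2"
    then show "\<bar>f x + g x\<bar> \<le> C1 + C2" using 1(2)[of x] 2(2)[of x] by auto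
  qed
qed

lemma Linf_cmult: "f \<in> Linf \<Longrightarrow> (\<lambda>x. c * f x) \<in> Linf"
proof -
  assume f: "f \<in> Linf"
  obtain C1 N1 where 1: "N1 \<in> null_sets lborel" "\<And>x. 0 \<le> x \<Longrightarrow> x \<notin> N1 \<Longrightarrow> \<bar>f x\<bar> \<le> C1"
    using Linf_bnd[OF f] by metis
  show ?thesis
  proof (rule LinfI[where N="N1" and C="\<bar>c\<bar> * C1"])
    have "(\<lambda>x. c * (indicator {0..} x * f x)) \<in> borel_measurable lebesgue"
      using borel_measurable_times[OF borel_measurable_const[of c] Linf_meas[OF f]] .
    also have "(\<lambda>x. c * (indicator {0..} x * f x)) = (\<lambda>x. indicator {0..} x * (c * f x))"
      by (simp add: fun_eq_iff mult.left_commute)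
    finally show "(\<lambda>x. indicator {0..} x * (c * f x)) \<in> borel_measurable lebesgue" .
    show "N1 \<in> null_sets lborel" using 1 by auto
    fix x :: real assume "0 \<le> x" "x \<notin> N1"
    then show "\<bar>c * f x\<bar> \<le> \<bar>c\<bar> * C1" using 1(2)[of x] by (simp add: abs_mult mult_left_mono)
  qed
qed

lemma Linf_const: "(\<lambda>x. c) \<in> Linf"
  by (rule LinfI[where N="{}" and C="\<bar>c\<bar>"])
     (auto intro!: borel_measurable_times borel_measurable_indicator)

lemma Linf_sum: "finite I \<Longrightarrow> (\<And>i. i \<in> I \<Longrightarrow> g i \<in> Linf) \<Longrightarrow> (\<lambda>x. \<Sum>i\<in>I. c i * g i x) \<in> Linf"
proof (induction I rule: finite_induct)
  case empty then show ?case using Linf_const[of 0] by simp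
next
  case (insert i I)
  then show ?case using Linf_add[OF Linf_cmult[of "g i" "c i"], of "\<lambda>x. \<Sum>i\<in>I. c i * g i x"] by simp
qed

lemma Linf_shift:
  assumes f: "f \<in> Linf" and s: "0 \<le> s" shows "(\<lambda>y. f (y + s)) \<in> Linf"
proof -
  obtain C1 N1 where 1: "N1 \<in> null_sets lborel" "\<And>x. 0 \<le> x \<Longrightarrow> x \<notin> N1 \<Longrightarrow> \<bar>f x\<bar> \<le> C1"
    using Linf_bnd[OF f] by metis
  have T: "(\<lambda>y::real. s + 1 * y) \<in> lebesgue \<rightarrow>\<^sub>M lebesgue"
    using lebesgue_affine_measurable[where c="\<lambda>x::real. 1" and t=s] by simp
  have "(\<lambda>y. indicator {0..} (s + 1 * y) * f (s + 1 * y)) \<in> borel_measurable lebesgue"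
    using measurable_compose[OF T Linf_meas[OF f]] by simp
  note m0 = this
  have "(\<lambda>y. indicator {0..} y * (indicator {0..} (s + 1 * y) * f (s + 1 * y))) \<in> borel_measurable lebesgue"
    by (intro borel_measurable_times[OF _ m0] borel_measurable_indicator) auto
  also have "(\<lambda>y. indicator {0..} y * (indicator {0..} (s + 1 * y) * f (s + 1 * y))) = (\<lambda>y. indicator {0..} y * f (y + s))"
    using s by (auto simp: indicator_def add.commute)
  finally have m: "(\<lambda>y. indicator {0..} y * f (y + s)) \<in> borel_measurable lebesgue" .
  show ?thesis
  proof (rule LinfI[OF m, where N="{x. x - (-s) \<in> N1}" and C=C1])
    show "{x. x - (-s) \<in> N1} \<in> null_sets lborel" by (rule null_sets_translation[OF 1(1)])
    fix x :: real assume "0 \<le> x" "x \<notin> {x. x - (-s) \<in> N1}"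
    then show "\<bar>f (x + s)\<bar> \<le> C1" using 1(2)[of "x + s"] s by auto
  qed
qed

lemma Linf_set_integrable:
  assumes f: "f \<in> Linf" and S: "S \<in> sets lebesgue" "S \<subseteq> {0..}" "emeasure lebesgue S < \<infinity>"
  shows "set_integrable lebesgue S f"
proof -
  obtain C1 N1 where 1: "N1 \<in> null_sets lborel" "\<And>x. 0 \<le> x \<Longrightarrow> x \<notin> N1 \<Longrightarrow> \<bar>f x\<bar> \<le> C1"
    using Linf_bnd[OF f] by metis
  have "set_integrable lebesgue S (\<lambda>x. C1)"
    unfolding set_integrable_def using integrable_real_indicator[OF S(1) S(3)]
    by (intro integrable_scaleR_left) simp
  moreover have "set_borel_measurable lebesgue S f"
  proof -
    have "(\<lambda>x. indicator S x * (indicator {0..} x * f x)) \<in> borel_measurable lebesgue"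
      using Linf_meas[OF f] S by (intro borel_measurable_times[OF _ Linf_meas[OF f]] borel_measurable_indicator) auto
    also have "(\<lambda>x. indicator S x * (indicator {0..} x * f x)) = (\<lambda>x. indicator S x *\<^sub>R f x)"
      using S(2) by (auto simp: indicator_def fun_eq_iff)
    finally show ?thesis unfolding set_borel_measurable_def .
  qed
  moreover have "AE x in lebesgue. x \<in> S \<longrightarrow> norm (f x) \<le> norm C1"
    by (rule AE_lebesgue_notin[OF 1(1)]) (use S(2) 1(2) in force)
  ultimately show ?thesis by (rule set_integrable_bound)
qed

lemma Linf_Icc: "f \<in> Linf \<Longrightarrow> 0 \<le> a \<Longrightarrow> set_integrable lebesgue {a..b} f"
  by (rule Linf_set_integrable) (auto, cases "a \<le> b", auto)


definition prim :: "(real \<Rightarrow> real) \<Rightarrow> real \<Rightarrow> real" where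
  "prim f y = (LINT t:{0..y}|lebesgue. f t)"

lemma Linf_HK:
  assumes "f \<in> Linf" "0 \<le> a"
  shows "f integrable_on {a..b}" "(LINT t:{a..b}|lebesgue. f t) = integral {a..b} f"
  using set_lebesgue_integral_eq_integral[OF Linf_Icc[OF assms]] by auto

lemma Linf_split:
  assumes "f \<in> Linf" "0 \<le> a" "a \<le> b"
  shows "(LINT t:{a..b}|lebesgue. f t) = prim f b - prim f a"
proof -
  have "integral {0..a} f + integral {a..b} f = integral {0..b} f"
    using Henstock_Kurzweil_Integration.integral_combine[OF assms(2,3) Linf_HK(1)[OF assms(1) order_refl, of b]] by simp
  then show ?thesis unfolding prim_def using Linf_HK(2)[OF assms(1)] assms by simp
qed

lemma Linf_int_bound:
  assumes f: "f \<in> Linf" and C: "N \<in> null_sets lborel" "\<And>x. 0 \<le> x \<Longrightarrow> x \<notin> N \<Longrightarrow> \<bar>f x\<bar> \<le> C"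
    and ab: "0 \<le> a" "a \<le> b"
  shows "\<bar>LINT t:{a..b}|lebesgue. f t\<bar> \<le> C * (b - a)"
proof -
  have "\<bar>LINT t:{a..b}|lebesgue. f t\<bar> \<le> (LINT t:{a..b}|lebesgue. \<bar>f t\<bar>)"
    using set_integral_norm_bound[OF Linf_Icc[OF f ab(1)]] by simp
  also have "\<dots> \<le> (LINT t:{a..b}|lebesgue. C)"
  proof (rule set_integral_mono_AE)
    show "set_integrable lebesgue {a..b} (\<lambda>t. \<bar>f t\<bar>)"
      using set_integrable_abs[OF Linf_Icc[OF f ab(1)]] .
    show "set_integrable lebesgue {a..b} (\<lambda>t. C)"
      using Linf_Icc[OF Linf_const ab(1)] .
    show "AE x\<in>{a..b} in lebesgue. \<bar>f x\<bar> \<le> C"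
      by (rule AE_lebesgue_notin[OF C(1)]) (use C(2) ab in auto)
  qed
  also have "\<dots> = C * (b - a)"
    using ab by (subst set_integral_const) auto
  finally show ?thesis .
qed

lemma Linf_C:
  assumes f: "f \<in> Linf"
  obtains C where "C \<ge> 0" "\<And>a b. 0 \<le> a \<Longrightarrow> a \<le> b \<Longrightarrow> \<bar>prim f b - prim f a\<bar> \<le> C * (b - a)"
    "\<And>a b. 0 \<le> a \<Longrightarrow> a \<le> b \<Longrightarrow> \<bar>LINT t:{a..b}|lebesgue. f t\<bar> \<le> C * (b - a)"
    "AE x in lebesgue. x \<ge> 0 \<longrightarrow> \<bar>f x\<bar> \<le> C"
proof -
  obtain C N where 1: "C \<ge> 0" "N \<in> null_sets lborel" "\<And>x. 0 \<le> x \<Longrightarrow> x \<notin> N \<Longrightarrow> \<bar>f x\<bar> \<le> C"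
    using Linf_bnd[OF f] by metis
  show ?thesis
  proof (rule that[OF 1(1)])
    fix a b :: real assume ab: "0 \<le> a" "a \<le> b"
    show "\<bar>LINT t:{a..b}|lebesgue. f t\<bar> \<le> C * (b - a)" by (rule Linf_int_bound[OF f 1(2,3) ab])
    then show "\<bar>prim f b - prim f a\<bar> \<le> C * (b - a)" using Linf_split[OF f ab] by simp
  next
    show "AE x in lebesgue. x \<ge> 0 \<longrightarrow> \<bar>f x\<bar> \<le> C"
      by (rule AE_lebesgue_notin[OF 1(2)]) (use 1(3) in auto)
  qed
qed

lemma Linf_shift_int:
  assumes f: "f \<in> Linf" and s: "0 \<le> s" and x: "0 \<le> x"
  shows "(LINT y:{0..x}|lebesgue. f (y + s)) = prim f (s + x) - prim f s"
proof -
  have "(LINT y:{0..x}|lebesgue. f (y + s)) = integral {0..x} (\<lambda>y. f (y + s))"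
    using Linf_HK(2)[OF Linf_shift[OF f s], of 0 x] by simp
  also have "\<dots> = integral {0..x} (f \<circ> (+) s)" by (simp add: o_def add.commute)
  also have "\<dots> = integral {s..x+s} f" using integral_shift_Icc_real[of 0 x f s] by simp
  also have "\<dots> = (LINT t:{s..s+x}|lebesgue. f t)" using Linf_HK(2)[OF f s, of "s+x"] by (simp add: add.commute)
  also have "\<dots> = prim f (s + x) - prim f s" using Linf_split[OF f s] x by simp
  finally show ?thesis .
qed

lemma prim_add: "f \<in> Linf \<Longrightarrow> g \<in> Linf \<Longrightarrow> 0 \<le> y \<Longrightarrow> prim (\<lambda>x. f x + g x) y = prim f y + prim g y"
  unfolding prim_def by (rule set_integral_add) (auto intro: Linf_Icc)

lemma prim_cmult: "prim (\<lambda>x. c * f x) y = c * prim f y"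
  unfolding prim_def by simp

lemma prim_const: "0 \<le> y \<Longrightarrow> prim (\<lambda>x. c) y = c * y"
  unfolding prim_def by (subst set_integral_const) auto

lemma prim_nonneg:
  assumes "f \<in> Linf" "AE x in lebesgue. x \<ge> 0 \<longrightarrow> f x \<ge> 0" "0 \<le> a" "a \<le> b"
  shows "prim f a \<le> prim f b"
proof -
  have "0 \<le> (LINT t:{a..b}|lebesgue. f t)"
  proof -
    have "(LINT t:{a..b}|lebesgue. (0::real)) \<le> (LINT t:{a..b}|lebesgue. f t)"
      by (rule set_integral_mono_AE) (use assms in \<open>auto intro: Linf_Icc Linf_const elim!: eventually_mono\<close>)
    then show ?thesis by simp
  qed
  then show ?thesis using Linf_split[OF assms(1,3,4)] by simp
qed


lemma window_sum:
  fixes G :: "real \<Rightarrow> real"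
  assumes th: "\<theta> > 0" and win: "\<And>a. a0 \<le> a \<Longrightarrow> G (a + \<theta>) - G a \<le> \<theta> * B"
    and lip: "\<And>a b. a0 \<le> a \<Longrightarrow> a \<le> b \<Longrightarrow> \<bar>G b - G a\<bar> \<le> C * (b - a)"
    and y: "0 \<le> y"
  shows "G (a0 + y) - G a0 \<le> y * B + \<theta> * (C + \<bar>B\<bar>)"
proof -
  have step: "G (a0 + real k * \<theta>) - G a0 \<le> real k * \<theta> * B" for k :: nat
  proof (induction k)
    case 0 then show ?case by simp
  next
    case (Suc k)
    have "G (a0 + real k * \<theta> + \<theta>) - G (a0 + real k * \<theta>) \<le> \<theta> * B"
      using win[of "a0 + real k * \<theta>"] th by simp
    then show ?case using Suc.IH by (simp add: algebra_simps)
  qed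
  define m where "m = nat \<lfloor>y / \<theta>\<rfloor>"
  define r where "r = y - real m * \<theta>"
  have fl: "real m = of_int \<lfloor>y / \<theta>\<rfloor>" unfolding m_def using y th by simp
  have "real m \<le> y / \<theta>" using fl by linarith
  then have r0: "0 \<le> r" unfolding r_def using th by (simp add: field_simps)
  have "y / \<theta> < real m + 1" using fl by linarith
  then have r1: "r < \<theta>" unfolding r_def using th by (simp add: field_simps)
  have "\<bar>G (a0 + 1) - G a0\<bar> \<le> C" using lip[of a0 "a0 + 1"] by simp
  then have Cnn: "C \<ge> 0" by (meson abs_ge_zero order_trans)
  have "G (a0 + y) - G (a0 + real m * \<theta>) \<le> C * r"
    using lip[of "a0 + real m * \<theta>" "a0 + y"] r0 th unfolding r_def by (simp add: algebra_simps)
  also have "\<dots> \<le> C * \<theta>" using r1 Cnn by (simp add: mult_left_mono)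
  finally have A: "G (a0 + y) - G (a0 + real m * \<theta>) \<le> C * \<theta>" .
  have B: "real m * \<theta> * B \<le> y * B + \<theta> * \<bar>B\<bar>"
  proof -
    have "real m * \<theta> * B = y * B - r * B" unfolding r_def by (simp add: algebra_simps)
    moreover have "- (r * B) \<le> \<theta> * \<bar>B\<bar>"
    proof -
      have "r * (- B) \<le> r * \<bar>B\<bar>" using r0 by (intro mult_left_mono) auto
      then have "- (r * B) \<le> r * \<bar>B\<bar>" by simp
      also have "\<dots> \<le> \<theta> * \<bar>B\<bar>" using r1 by (simp add: mult_right_mono)
      finally show ?thesis .
    qed
    ultimately show ?thesis by simp
  qed
  show ?thesis using A B step[of m] by (simp add: algebra_simps)
qed

definition wavg :: "(real \<Rightarrow> real) \<Rightarrow> real \<Rightarrow> real \<Rightarrow> real" where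
  "wavg f \<theta> x = (1 / \<theta>) * (LINT t:{x..x+\<theta>}|lebesgue. f t)"

lemma wavg_prim: "f \<in> Linf \<Longrightarrow> 0 \<le> x \<Longrightarrow> \<theta> > 0 \<Longrightarrow> wavg f \<theta> x = (prim f (x + \<theta>) - prim f x) / \<theta>"
  unfolding wavg_def using Linf_split[of f x "x + \<theta>"] by simp

definition ls :: "(real \<Rightarrow> real) \<Rightarrow> real \<Rightarrow> real" where
  "ls f \<theta> = real_of_ereal (Limsup at_top (\<lambda>x. ereal (wavg f \<theta> x)))"

lemma ls_props:
  assumes f: "f \<in> Linf" and C: "C \<ge> 0" "\<And>a b. 0 \<le> a \<Longrightarrow> a \<le> b \<Longrightarrow> \<bar>prim f b - prim f a\<bar> \<le> C * (b - a)"
    and th: "\<theta> > 0"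
  shows "Limsup at_top (\<lambda>x. ereal (wavg f \<theta> x)) = ereal (ls f \<theta>)" "\<bar>ls f \<theta>\<bar> \<le> C"
    "\<And>\<epsilon>. \<epsilon> > 0 \<Longrightarrow> eventually (\<lambda>x. wavg f \<theta> x < ls f \<theta> + \<epsilon>) at_top"
    "\<And>\<epsilon> T. \<epsilon> > 0 \<Longrightarrow> \<exists>x\<ge>T. wavg f \<theta> x > ls f \<theta> - \<epsilon>"
proof -
  have bnd: "\<bar>wavg f \<theta> x\<bar> \<le> C" if "x \<ge> 0" for x
  proof -
    have "\<bar>prim f (x + \<theta>) - prim f x\<bar> \<le> C * \<theta>" using C(2)[of x "x + \<theta>"] that th by simp
    then show ?thesis using wavg_prim[OF f that th] th by (simp add: abs_divide pos_divide_le_eq)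
  qed
  define L where "L = Limsup at_top (\<lambda>x. ereal (wavg f \<theta> x))"
  have ev: "eventually (\<lambda>x::real. x \<ge> 0) at_top" by (rule eventually_ge_at_top)
  have bnd2: "wavg f \<theta> x \<le> C \<and> - C \<le> wavg f \<theta> x" if "x \<ge> 0" for x
    using bnd[OF that] by (simp add: abs_le_iff)
  have up: "L \<le> ereal C" unfolding L_def
    by (rule Limsup_bounded, rule eventually_mono[OF ev]) (simp add: bnd2)
  have lo: "ereal (- C) \<le> L" unfolding L_def
    by (rule le_Limsup, simp, rule eventually_mono[OF ev]) (simp add: bnd2)
  obtain r where Lr: "L = ereal r" using up lo by (cases L) auto
  have lsr: "ls f \<theta> = r" unfolding ls_def L_def[symmetric] Lr by simp
  show "Limsup at_top (\<lambda>x. ereal (wavg f \<theta> x)) = ereal (ls f \<theta>)" using Lr lsr L_def by simp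
  show "\<bar>ls f \<theta>\<bar> \<le> C" using up lo Lr lsr by auto
  fix \<epsilon> :: real assume e: "\<epsilon> > 0"
  have "ereal (r + \<epsilon>) > L" using Lr e by simp
  then have "eventually (\<lambda>x. ereal (wavg f \<theta> x) < ereal (r + \<epsilon>)) at_top"
    unfolding L_def by (rule Limsup_lessD)
  then show "eventually (\<lambda>x. wavg f \<theta> x < ls f \<theta> + \<epsilon>) at_top" using lsr by (auto elim!: eventually_mono)
  fix T :: real
  show "\<exists>x\<ge>T. wavg f \<theta> x > ls f \<theta> - \<epsilon>"
  proof (rule ccontr)
    assume "\<not> ?thesis"
    then have "\<forall>x\<ge>T. ereal (wavg f \<theta> x) \<le> ereal (r - \<epsilon>)"
      using lsr by (auto simp: not_less)
    then have "eventually (\<lambda>x. ereal (wavg f \<theta> x) \<le> ereal (r - \<epsilon>)) at_top"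
      unfolding eventually_at_top_linorder by blast
    then have "L \<le> ereal (r - \<epsilon>)" unfolding L_def by (rule Limsup_bounded)
    then show False using Lr e by simp
  qed
qed

lemma ls_sub:
  assumes f: "f \<in> Linf" and C: "C \<ge> 0" "\<And>a b. 0 \<le> a \<Longrightarrow> a \<le> b \<Longrightarrow> \<bar>prim f b - prim f a\<bar> \<le> C * (b - a)"
    and th: "\<theta> > 0" "\<theta> \<le> \<theta>'"
  shows "ls f \<theta>' \<le> ls f \<theta> + \<theta> / \<theta>' * (2 * C + 1)"
proof (rule ccontr)
  assume nt: "\<not> ?thesis"
  define gap where "gap = ls f \<theta>' - (ls f \<theta> + \<theta> / \<theta>' * (2 * C + 1))"
  have gap: "gap > 0" using nt unfolding gap_def by simp
  define \<delta> where "\<delta> = min 1 (gap / 2)"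
  have d: "\<delta> > 0" "\<delta> \<le> 1" "\<delta> \<le> gap / 2" using gap unfolding \<delta>_def by auto
  have th': "\<theta>' > 0" using th by simp
  obtain X where X: "\<And>x. x \<ge> X \<Longrightarrow> wavg f \<theta> x < ls f \<theta> + \<delta>"
    using ls_props(3)[OF f C th(1) d(1)] unfolding eventually_at_top_linorder by blast
  define B where "B = ls f \<theta> + \<delta>"
  have absB: "\<bar>B\<bar> \<le> C + 1" using ls_props(2)[OF f C th(1)] d unfolding B_def by auto
  have main: "wavg f \<theta>' x \<le> ls f \<theta>' - gap / 2" if x: "x \<ge> max X 0" for x
  proof -
    have "prim f (x + \<theta>') - prim f x \<le> \<theta>' * B + \<theta> * (C + \<bar>B\<bar>)"
    proof (rule window_sum[OF th(1)])
      fix a assume a: "x \<le> a"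
      then have "wavg f \<theta> a < B" using X[of a] x unfolding B_def by simp
      then have "(prim f (a + \<theta>) - prim f a) / \<theta> < B" using wavg_prim[OF f _ th(1), of a] a x by simp
      then show "prim f (a + \<theta>) - prim f a \<le> \<theta> * B" using th(1) by (simp add: pos_divide_less_eq mult.commute)
    next
      fix a b assume "x \<le> a" "a \<le> b"
      then show "\<bar>prim f b - prim f a\<bar> \<le> C * (b - a)" using C(2) x by simp
    qed (use th in simp)
    also have "\<dots> \<le> \<theta>' * B + \<theta> * (2 * C + 1)" using absB th by (simp add: mult_left_mono)
    finally have "(prim f (x + \<theta>') - prim f x) / \<theta>' \<le> (\<theta>' * B + \<theta> * (2 * C + 1)) / \<theta>'"
      using th' by (simp add: divide_right_mono)
    also have "\<dots> = B + \<theta> / \<theta>' * (2 * C + 1)" using th' by (simp add: field_simps)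
    finally have "wavg f \<theta>' x \<le> B + \<theta> / \<theta>' * (2 * C + 1)" using wavg_prim[OF f _ th', of x] x by simp
    moreover have "\<And>w a k l \<delta>::real. w \<le> a + \<delta> + k \<Longrightarrow> \<delta> \<le> (l - (a + k)) / 2 \<Longrightarrow> w \<le> l - (l - (a + k)) / 2"
      by (simp add: field_simps)
    ultimately show ?thesis using d unfolding B_def gap_def by blast
  qed
  obtain x where "x \<ge> max X 0" "wavg f \<theta>' x > ls f \<theta>' - gap / 2"
    using ls_props(4)[OF f C th', of "gap / 2" "max X 0"] gap by auto
  then show False using main by fastforce
qed

lemma upper_mean_props:
  assumes f: "f \<in> Linf"
  obtains M where "upper_mean f = ereal M"
    "\<And>\<theta> \<epsilon> T. \<theta> > 0 \<Longrightarrow> \<epsilon> > 0 \<Longrightarrow> \<exists>x\<ge>T. x \<ge> 0 \<and> prim f (x + \<theta>) - prim f x \<ge> \<theta> * (M - \<epsilon>)"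
    "\<And>\<epsilon>. \<epsilon> > 0 \<Longrightarrow> \<exists>\<theta>>0. \<exists>X\<ge>0. \<forall>x\<ge>X. prim f (x + \<theta>) - prim f x \<le> \<theta> * (M + \<epsilon>)"
proof -
  obtain C where C: "C \<ge> 0" "\<And>a b. 0 \<le> a \<Longrightarrow> a \<le> b \<Longrightarrow> \<bar>prim f b - prim f a\<bar> \<le> C * (b - a)"
    using Linf_C[OF f] by metis
  define M where "M = Inf (ls f ` {0<..})"
  have bdd: "bdd_below (ls f ` {0<..})"
    using ls_props(2)[OF f C] by (intro bdd_belowI[of _ "-C"]) force
  have Mle: "M \<le> ls f \<theta>" if "\<theta> > 0" for \<theta>
    unfolding M_def using bdd that by (intro cInf_lower) auto
  have lim: "((\<lambda>\<theta>. ls f \<theta>) \<longlongrightarrow> M) at_top"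
    unfolding tendsto_iff eventually_at_top_linorder
  proof (intro allI impI)
    fix \<epsilon> :: real assume e: "\<epsilon> > 0"
    have "\<exists>x\<in>ls f ` {0<..}. x < M + \<epsilon> / 2"
      unfolding M_def by (rule cInf_lessD) (use e in auto)
    then obtain \<theta>0 where t0: "\<theta>0 > 0" "ls f \<theta>0 < M + \<epsilon> / 2" by auto
    define N where "N = max \<theta>0 (2 * \<theta>0 * (2 * C + 1) / \<epsilon> + 1)"
    show "\<exists>N. \<forall>\<theta>\<ge>N. dist (ls f \<theta>) M < \<epsilon>"
    proof (intro exI allI impI)
      fix \<theta> assume th: "\<theta> \<ge> N"
      then have th0: "\<theta> \<ge> \<theta>0" "\<theta> > 2 * \<theta>0 * (2 * C + 1) / \<epsilon>" unfolding N_def by auto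
      have tpos: "\<theta> > 0" using th0 t0 by simp
      have "2 * \<theta>0 * (2 * C + 1) < \<theta> * \<epsilon>" using th0(2) e by (simp add: pos_divide_less_eq)
      then have q: "\<theta>0 / \<theta> * (2 * C + 1) < \<epsilon> / 2" using tpos by (simp add: field_simps)
      have "ls f \<theta> \<le> ls f \<theta>0 + \<theta>0 / \<theta> * (2 * C + 1)" by (rule ls_sub[OF f C t0(1) th0(1)])
      then have "ls f \<theta> < M + \<epsilon>" using q t0(2) by linarith
      moreover have "M \<le> ls f \<theta>" using Mle tpos by simp
      ultimately show "dist (ls f \<theta>) M < \<epsilon>" by (simp add: dist_real_def)
    qed
  qed
  have "((\<lambda>\<theta>. Limsup at_top (\<lambda>x. ereal ((1 / \<theta>) * (LINT t:{x..x+\<theta>}|lebesgue. f t)))) \<longlongrightarrow> ereal M) at_top"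
  proof (rule Lim_transform_eventually[OF tendsto_ereal[OF lim]])
    show "\<forall>\<^sub>F x in at_top. ereal (ls f x) = Limsup at_top (\<lambda>xa. ereal (1 / x * (LINT t:{xa..xa + x}|lebesgue. f t)))"
      using eventually_gt_at_top[of 0] by eventually_elim (use ls_props(1)[OF f C] in \<open>simp add: wavg_def\<close>)
  qed
  then have um: "upper_mean f = ereal M" unfolding upper_mean_def by (intro tendsto_Lim) auto
  show ?thesis
  proof (rule that[OF um])
    fix \<theta> \<epsilon> T :: real assume th: "\<theta> > 0" and e: "\<epsilon> > 0"
    obtain x where x: "x \<ge> max T 0" "wavg f \<theta> x > ls f \<theta> - \<epsilon>" using ls_props(4)[OF f C th e] by blast
    then have "(prim f (x + \<theta>) - prim f x) / \<theta> > M - \<epsilon>" using wavg_prim[OF f _ th, of x] Mle[OF th] by simp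
    then have "prim f (x + \<theta>) - prim f x \<ge> \<theta> * (M - \<epsilon>)" using th by (simp add: pos_less_divide_eq mult.commute)
    then show "\<exists>x\<ge>T. x \<ge> 0 \<and> prim f (x + \<theta>) - prim f x \<ge> \<theta> * (M - \<epsilon>)" using x(1) by auto
  next
    fix \<epsilon> :: real assume e: "\<epsilon> > 0"
    have "\<exists>x\<in>ls f ` {0<..}. x < M + \<epsilon> / 2"
      unfolding M_def by (rule cInf_lessD) (use e in auto)
    then obtain \<theta> where th: "\<theta> > 0" "ls f \<theta> < M + \<epsilon> / 2" by auto
    obtain X where X: "\<And>x. x \<ge> X \<Longrightarrow> wavg f \<theta> x < ls f \<theta> + \<epsilon> / 2"
      using ls_props(3)[OF f C th(1), of "\<epsilon> / 2"] e unfolding eventually_at_top_linorder by auto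
    have "\<forall>x\<ge>max X 0. prim f (x + \<theta>) - prim f x \<le> \<theta> * (M + \<epsilon>)"
    proof (intro allI impI)
      fix x assume x: "max X 0 \<le> x"
      then have "(prim f (x + \<theta>) - prim f x) / \<theta> < M + \<epsilon>" using X[of x] th wavg_prim[OF f _ th(1), of x] by simp
      then show "prim f (x + \<theta>) - prim f x \<le> \<theta> * (M + \<epsilon>)" using th by (simp add: pos_divide_less_eq mult.commute)
    qed
    then show "\<exists>\<theta>>0. \<exists>X\<ge>0. \<forall>x\<ge>X. prim f (x + \<theta>) - prim f x \<le> \<theta> * (M + \<epsilon>)" using th(1) by (intro exI[of _ \<theta>] conjI exI[of _ "max X 0"]) auto
  qed
qed


definition wt :: "real \<Rightarrow> real" where "wt y = indicator {0..} y * exp (- y)"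

definition Mw :: "real measure" where
  "Mw = density lebesgue (\<lambda>y. ennreal (wt y))"

lemma wt_meas[measurable]: "wt \<in> borel_measurable lebesgue"
proof -
  have "(\<lambda>x::real. exp (- x)) \<in> borel_measurable lebesgue"
    by (rule measurable_completion) simp
  then show ?thesis
    unfolding wt_def by (intro borel_measurable_times borel_measurable_indicator) auto
qed

lemma wt_nonneg: "0 \<le> wt y" unfolding wt_def by simp

lemma wt_pos_iff: "0 < wt y \<longleftrightarrow> 0 \<le> y" unfolding wt_def by (simp add: indicator_def)

lemma Mw_sets[simp, measurable_cong]: "sets Mw = sets lebesgue"
  unfolding Mw_def by simp

lemma Mw_space[simp]: "space Mw = UNIV"
  unfolding Mw_def by simp

lemma Mw_meas_iff: "f \<in> borel_measurable Mw \<longleftrightarrow> f \<in> borel_measurable lebesgue"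
  unfolding measurable_cong_sets[OF Mw_sets refl, of borel] ..

lemma wt_integrable: "integrable lebesgue wt"
proof -
  have "(\<lambda>x. exp (- 1 * x)) integrable_on {0::real..}"
    using integrable_on_exp_minus_to_infinity[of 1 0] by simp
  then have "(\<lambda>x. exp (- 1 * x)) absolutely_integrable_on {0::real..}"
    by (rule nonnegative_absolutely_integrable_1) auto
  then show ?thesis unfolding set_integrable_def wt_def by simp
qed

lemma Mw_finite: "finite_measure Mw"
proof (rule finite_measureI)
  have "emeasure Mw (space Mw) = (\<integral>\<^sup>+ y. ennreal (wt y) * indicator UNIV y \<partial>lebesgue)"
    unfolding Mw_def by (subst emeasure_density) auto
  also have "\<dots> = (\<integral>\<^sup>+ y. ennreal (norm (wt y)) \<partial>lebesgue)" using wt_nonneg by simp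
  also have "\<dots> < \<infinity>" using wt_integrable unfolding integrable_iff_bounded by simp
  finally show "emeasure Mw (space Mw) \<noteq> \<infinity>" by simp
qed

interpretation Mw: finite_measure Mw by (rule Mw_finite)

lemma AE_Mw: "(AE y in Mw. P y) \<longleftrightarrow> (AE y in lebesgue. 0 \<le> y \<longrightarrow> P y)"
  unfolding Mw_def by (subst AE_density) (auto simp: wt_pos_iff)

lemma integral_Mw: "f \<in> borel_measurable lebesgue \<Longrightarrow> integral\<^sup>L Mw f = integral\<^sup>L lebesgue (\<lambda>y. wt y * f y)"
  unfolding Mw_def by (subst integral_density) (auto simp: wt_nonneg)

lemma integrable_Mw: "f \<in> borel_measurable lebesgue \<Longrightarrow> integrable Mw f \<longleftrightarrow> integrable lebesgue (\<lambda>y. wt y * f y)"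
  unfolding Mw_def by (subst integrable_density) (auto simp: wt_nonneg)


lemma ulim_density:
  fixes k :: "real \<Rightarrow> real \<Rightarrow> real" and F :: "real filter"
  assumes F: "ultrafilter F"
    and km: "\<And>s. k s \<in> borel_measurable lebesgue"
    and kb0: "\<And>s y. 0 \<le> k s y" and kb1: "\<And>s y. k s y \<le> B"
  obtains d where "d \<in> borel_measurable lebesgue" "\<And>y. 0 \<le> d y" "integrable Mw d"
    "\<And>A. A \<in> sets lebesgue \<Longrightarrow>
       ((\<lambda>s. integral\<^sup>L Mw (\<lambda>y. indicator A y * k s y)) \<longlongrightarrow> integral\<^sup>L Mw (\<lambda>y. indicator A y * d y)) F"
proof -
  have Fnb: "F \<noteq> bot" using F unfolding ultrafilter_def by simp
  have B0: "0 \<le> B" using kb0[of 0 0] kb1[of 0 0] by linarith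
  define \<mu> where "\<mu> s A = integral\<^sup>L Mw (\<lambda>y. indicator A y * k s y)" for s A
  have kmw: "k s \<in> borel_measurable Mw" for s using km Mw_meas_iff by blast
  have int: "integrable Mw (\<lambda>y. indicator A y * k s y)" if "A \<in> sets lebesgue" for A s
  proof (rule Mw.integrable_const_bound[where B=B])
    show "AE y in Mw. norm (indicator A y * k s y) \<le> B"
      by (rule AE_I2) (use kb0 kb1 B0 in \<open>auto simp: indicator_def\<close>)
    show "(\<lambda>y. indicator A y * k s y) \<in> borel_measurable Mw"
      using that kmw by (intro borel_measurable_times borel_measurable_indicator) auto
  qed
  have \<mu>b: "0 \<le> \<mu> s A \<and> \<mu> s A \<le> B * measure Mw A" if A: "A \<in> sets lebesgue" for s A
  proof
    show "0 \<le> \<mu> s A" unfolding \<mu>_def by (rule Bochner_Integration.integral_nonneg) (use kb0 in simp)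
    have iB: "integrable Mw (\<lambda>y. indicator A y * B)"
      using A by (intro integrable_mult_left integrable_real_indicator) (auto simp: less_top[symmetric])
    have "\<mu> s A \<le> integral\<^sup>L Mw (\<lambda>y. indicator A y * B)" unfolding \<mu>_def
      by (rule Bochner_Integration.integral_mono[OF int[OF A] iB]) (use kb1 in \<open>auto simp: indicator_def\<close>)
    also have "\<dots> = B * measure Mw A" using A by simp
    finally show "\<mu> s A \<le> B * measure Mw A" .
  qed
  define N0 where "N0 A = Lim F (\<lambda>s. \<mu> s A)" for A
  have N0lim: "((\<lambda>s. \<mu> s A) \<longlongrightarrow> N0 A) F \<and> 0 \<le> N0 A \<and> N0 A \<le> B * measure Mw A"
    if A: "A \<in> sets lebesgue" for A
  proof -
    obtain L where L: "L \<in> {0 .. B * measure Mw A}" "((\<lambda>s. \<mu> s A) \<longlongrightarrow> L) F"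
      using ultrafilter_converges[OF F, of "\<lambda>s. \<mu> s A" 0 "B * measure Mw A"] \<mu>b[OF A] by auto
    have "N0 A = L" unfolding N0_def using L(2) Fnb by (intro tendsto_Lim) auto
    then show ?thesis using L by auto
  qed
  have N0e: "N0 {} = 0" using N0lim[of "{}"] by simp
  have N0add: "N0 (A \<union> C) = N0 A + N0 C"
    if AC: "A \<in> sets lebesgue" "C \<in> sets lebesgue" "A \<inter> C = {}" for A C
  proof -
    have "\<mu> s (A \<union> C) = \<mu> s A + \<mu> s C" for s
    proof -
      have "(\<lambda>y. indicator (A \<union> C) y * k s y) = (\<lambda>y. indicator A y * k s y + indicator C y * k s y)"
        using AC(3) by (auto simp: indicator_def fun_eq_iff)
      then show ?thesis unfolding \<mu>_def using int AC by (simp add: Bochner_Integration.integral_add)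
    qed
    then have "((\<lambda>s. \<mu> s (A \<union> C)) \<longlongrightarrow> N0 A + N0 C) F"
      using tendsto_add[OF conjunct1[OF N0lim[OF AC(1)]] conjunct1[OF N0lim[OF AC(2)]]] by simp
    moreover have "((\<lambda>s. \<mu> s (A \<union> C)) \<longlongrightarrow> N0 (A \<union> C)) F" using N0lim AC by blast
    ultimately show ?thesis using tendsto_unique[OF Fnb] by blast
  qed
  have N0sums: "(\<lambda>i. N0 (A i)) sums N0 (\<Union>i. A i)"
    if A: "range A \<subseteq> sets lebesgue" "disjoint_family A" for A :: "nat \<Rightarrow> real set"
  proof -
    define U where "U = (\<Union>i. A i)"
    have Us: "U \<in> sets lebesgue" using A unfolding U_def by auto
    have Ps: "(\<Union>i<n. A i) \<in> sets lebesgue" for n using A by auto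
    have As: "A i \<in> sets lebesgue" for i using A by auto
    have dj: "(\<Union>i<n. A i) \<inter> A n = {}" for n
    proof -
      have "A i \<inter> A n = {}" if "i < n" for i using A(2) that unfolding disjoint_family_on_def by auto
      then show ?thesis by auto
    qed
    have Suc_un: "(\<Union>i<Suc n. A i) = (\<Union>i<n. A i) \<union> A n" for n by (auto simp: lessThan_Suc)
    have part: "N0 (\<Union>i<n. A i) = (\<Sum>i<n. N0 (A i))" for n
    proof (induction n)
      case 0 then show ?case using N0e by simp
    next
      case (Suc n)
      then show ?case unfolding Suc_un using N0add[OF Ps[of n] As[of n] dj[of n]] by simp
    qed
    have mpart: "measure Mw (\<Union>i<n. A i) = (\<Sum>i<n. measure Mw (A i))" for n
    proof (induction n)
      case 0 then show ?case by simp
    next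
      case (Suc n)
      then show ?case unfolding Suc_un using Mw.finite_measure_Union[of "\<Union>i<n. A i" "A n"] Ps As dj by simp
    qed
    have msums: "(\<lambda>i. measure Mw (A i)) sums measure Mw U"
      unfolding U_def by (rule measure_UNION) (use A Mw.emeasure_finite in auto)
    define t where "t n = N0 U - (\<Sum>i<n. N0 (A i))" for n
    have sub: "(\<Union>i<n. A i) \<subseteq> U" for n unfolding U_def by auto
    have t_eq: "t n = N0 (U - (\<Union>i<n. A i))" for n
    proof -
      have "U = (\<Union>i<n. A i) \<union> (U - (\<Union>i<n. A i))" using sub[of n] by auto
      then have "N0 U = N0 (\<Union>i<n. A i) + N0 (U - (\<Union>i<n. A i))"
        using N0add[OF Ps[of n], of "U - (\<Union>i<n. A i)"] Us Ps[of n] by (metis Diff_disjoint sets.Diff)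
      then show ?thesis unfolding t_def part by simp
    qed
    have t_bnd: "0 \<le> t n \<and> t n \<le> B * (measure Mw U - (\<Sum>i<n. measure Mw (A i)))" for n
    proof -
      have "measure Mw (U - (\<Union>i<n. A i)) = measure Mw U - (\<Sum>i<n. measure Mw (A i))"
        using Mw.finite_measure_Diff[OF _ _ sub[of n]] Us Ps[of n] mpart[of n] by simp
      then show ?thesis unfolding t_eq using N0lim[of "U - (\<Union>i<n. A i)"] Us Ps[of n] by auto
    qed
    have "(\<lambda>n. (\<Sum>i<n. measure Mw (A i))) \<longlonglongrightarrow> measure Mw U" using msums unfolding sums_def .
    then have "(\<lambda>n. B * (measure Mw U - (\<Sum>i<n. measure Mw (A i)))) \<longlonglongrightarrow> B * (measure Mw U - measure Mw U)"
      by (intro tendsto_intros)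
    then have "(\<lambda>n. B * (measure Mw U - (\<Sum>i<n. measure Mw (A i)))) \<longlonglongrightarrow> 0" by simp
    then have "t \<longlonglongrightarrow> 0"
      by (intro real_tendsto_sandwich[where f="\<lambda>n. 0" and g=t] always_eventually tendsto_const)
         (use t_bnd in auto)
    then have "(\<lambda>n. N0 U - t n) \<longlonglongrightarrow> N0 U - 0" by (intro tendsto_intros)
    then show ?thesis unfolding sums_def t_def U_def by simp
  qed
  define Nm where "Nm = measure_of (space lebesgue) (sets lebesgue) (\<lambda>A. ennreal (N0 A))"
  have ca: "countably_additive (sets lebesgue) (\<lambda>A. ennreal (N0 A))"
    unfolding countably_additive_def
  proof (intro allI impI)
    fix A :: "nat \<Rightarrow> real set" assume A: "range A \<subseteq> sets lebesgue" "disjoint_family A"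
    then have s: "(\<lambda>i. N0 (A i)) sums N0 (\<Union>i. A i)" by (rule N0sums)
    have nn: "0 \<le> N0 (A i)" for i using N0lim[of "A i"] A by auto
    show "(\<Sum>i. ennreal (N0 (A i))) = ennreal (N0 (\<Union>(range A)))"
      using suminf_ennreal2[of "\<lambda>i. N0 (A i)", OF nn sums_summable[OF s]] sums_unique[OF s] by simp
  qed
  have pos: "positive (sets lebesgue) (\<lambda>A. ennreal (N0 A))" unfolding positive_def using N0e by simp
  have Nm_em: "emeasure Nm A = ennreal (N0 A)" if "A \<in> sets lebesgue" for A
    unfolding Nm_def by (rule emeasure_measure_of_sigma[OF sets.sigma_algebra_axioms pos ca that])
  have Nm_sets: "sets Nm = sets lebesgue" unfolding Nm_def by (rule sets.sets_measure_of_eq)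
  have ac: "absolutely_continuous Mw Nm"
    unfolding absolutely_continuous_def
  proof
    fix A assume "A \<in> null_sets Mw"
    then have As: "A \<in> sets lebesgue" "measure Mw A = 0" by (auto simp: null_sets_def measure_def)
    then have "N0 A = 0" using N0lim[OF As(1)] by auto
    then show "A \<in> null_sets Nm" using Nm_em[OF As(1)] Nm_sets As by (simp add: null_sets_def)
  qed
  obtain D where D: "D \<in> borel_measurable Mw" "density Mw D = Nm"
    using Mw.Radon_Nikodym[OF ac] Nm_sets by auto
  have Dint: "(\<integral>\<^sup>+y. D y * indicator A y \<partial>Mw) = ennreal (N0 A)" if "A \<in> sets lebesgue" for A
    using emeasure_density[OF D(1), of A] D(2) Nm_em[OF that] that by simp
  have DU: "(\<integral>\<^sup>+y. D y \<partial>Mw) = ennreal (N0 UNIV)" using Dint[of UNIV] by simp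
  have Dfin: "AE y in Mw. D y \<noteq> \<infinity>" by (rule nn_integral_PInf_AE[OF D(1)]) (use DU in simp)
  define d where "d y = enn2real (D y)" for y
  have dmw: "d \<in> borel_measurable Mw" unfolding d_def using D(1) by measurable
  then have dm: "d \<in> borel_measurable lebesgue" using Mw_meas_iff by blast
  have dnn: "0 \<le> d y" for y unfolding d_def by simp
  have Dd: "AE y in Mw. D y = ennreal (d y)" using Dfin by eventually_elim (simp add: d_def less_top)
  have dA: "integrable Mw (\<lambda>y. indicator A y * d y) \<and> integral\<^sup>L Mw (\<lambda>y. indicator A y * d y) = N0 A"
    if A: "A \<in> sets lebesgue" for A
  proof -
    have "(\<integral>\<^sup>+y. ennreal (indicator A y * d y) \<partial>Mw) = (\<integral>\<^sup>+y. D y * indicator A y \<partial>Mw)"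
      by (rule nn_integral_cong_AE) (use Dd in \<open>eventually_elim, simp add: indicator_def\<close>)
    then have eq: "(\<integral>\<^sup>+y. ennreal (indicator A y * d y) \<partial>Mw) = ennreal (N0 A)" using Dint[OF A] by simp
    have meas: "(\<lambda>y. indicator A y * d y) \<in> borel_measurable Mw"
      using A dmw by (intro borel_measurable_times borel_measurable_indicator) auto
    have i: "integrable Mw (\<lambda>y. indicator A y * d y)"
      by (rule integrableI_nonneg[OF meas]) (use eq dnn in auto)
    have "ennreal (integral\<^sup>L Mw (\<lambda>y. indicator A y * d y)) = ennreal (N0 A)"
      using nn_integral_eq_integral[OF i] eq dnn by simp
    moreover have "0 \<le> integral\<^sup>L Mw (\<lambda>y. indicator A y * d y)" by (rule Bochner_Integration.integral_nonneg) (use dnn in simp)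
    moreover have "0 \<le> N0 A" using N0lim[OF A] by simp
    ultimately show ?thesis using i by simp
  qed
  have dint: "integrable Mw d" using dA[of UNIV] by simp
  show thesis
  proof (rule that[OF dm dnn dint])
    fix A :: "real set" assume A: "A \<in> sets lebesgue"
    show "((\<lambda>s. integral\<^sup>L Mw (\<lambda>y. indicator A y * k s y)) \<longlongrightarrow> integral\<^sup>L Mw (\<lambda>y. indicator A y * d y)) F"
      using N0lim[OF A] dA[OF A] unfolding \<mu>_def by simp
  qed
qed


lemma density_bound:
  assumes dm: "d \<in> borel_measurable lebesgue" and di: "integrable Mw d"
    and b: "\<And>A. A \<in> sets lebesgue \<Longrightarrow> integral\<^sup>L Mw (\<lambda>y. indicator A y * d y) \<le> B * measure Mw A"
  shows "AE y in Mw. d y \<le> B"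
proof -
  define A where "A = {y. B < d y}"
  have "d -` {B<..} \<inter> space lebesgue \<in> sets lebesgue" by (rule measurable_sets[OF dm]) simp
  moreover have "d -` {B<..} \<inter> space lebesgue = A" unfolding A_def by auto
  ultimately have As: "A \<in> sets lebesgue" by simp
  define g where "g y = indicator A y * d y - indicator A y * B" for y
  have i1: "integrable Mw (\<lambda>y. indicator A y * d y)"
    using integrable_mult_indicator[of A Mw d] As di by simp
  have i2: "integrable Mw (\<lambda>y. indicator A y * B)"
    using As by (intro integrable_mult_left integrable_real_indicator) (auto simp: less_top[symmetric])
  have gi: "integrable Mw g" unfolding g_def using i1 i2 by simp
  have gnn: "0 \<le> g y" for y unfolding g_def A_def by (simp add: indicator_def)
  have "integral\<^sup>L Mw g = integral\<^sup>L Mw (\<lambda>y. indicator A y * d y) - B * measure Mw A"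
    unfolding g_def using i1 i2 As by simp
  also have "\<dots> \<le> 0" using b[OF As] by simp
  finally have "integral\<^sup>L Mw g \<le> 0" .
  moreover have "0 \<le> integral\<^sup>L Mw g" by (rule Bochner_Integration.integral_nonneg) (simp add: gnn)
  ultimately have "integral\<^sup>L Mw g = 0" by simp
  then have "AE y in Mw. g y = 0" using integral_nonneg_eq_0_iff_AE[OF gi] gnn by simp
  then show ?thesis by eventually_elim (auto simp: g_def A_def indicator_def split: if_splits)
qed

lemma int_bmult:
  fixes \<phi> b :: "'a \<Rightarrow> real"
  assumes "integrable M \<phi>" "b \<in> borel_measurable M" "AE y in M. \<bar>b y\<bar> \<le> K" "0 \<le> K"
  shows "integrable M (\<lambda>y. b y * \<phi> y)"
proof (rule Bochner_Integration.integrable_bound)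
  show "integrable M (\<lambda>y. K * \<bar>\<phi> y\<bar>)" using assms(1) by auto
  show "(\<lambda>y. b y * \<phi> y) \<in> borel_measurable M" using assms(1,2) by auto
  show "AE y in M. norm (b y * \<phi> y) \<le> norm (K * \<bar>\<phi> y\<bar>)"
    using assms(3) by eventually_elim (use assms(4) in \<open>auto simp: abs_mult intro: mult_right_mono\<close>)
qed

lemma int_bmult_bound:
  fixes \<phi> b :: "'a \<Rightarrow> real"
  assumes "integrable M \<phi>" "b \<in> borel_measurable M" "AE y in M. \<bar>b y\<bar> \<le> K" "0 \<le> K"
  shows "\<bar>integral\<^sup>L M (\<lambda>y. b y * \<phi> y)\<bar> \<le> K * integral\<^sup>L M (\<lambda>y. \<bar>\<phi> y\<bar>)"
proof -
  have "\<bar>integral\<^sup>L M (\<lambda>y. b y * \<phi> y)\<bar> \<le> integral\<^sup>L M (\<lambda>y. \<bar>b y * \<phi> y\<bar>)" by (rule integral_abs_bound)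
  also have "\<dots> \<le> integral\<^sup>L M (\<lambda>y. K * \<bar>\<phi> y\<bar>)"
  proof (rule integral_mono_AE)
    show "integrable M (\<lambda>y. \<bar>b y * \<phi> y\<bar>)" using int_bmult[OF assms] by auto
    show "integrable M (\<lambda>y. K * \<bar>\<phi> y\<bar>)" using assms(1) by auto
    show "AE y in M. \<bar>b y * \<phi> y\<bar> \<le> K * \<bar>\<phi> y\<bar>"
      using assms(3) by eventually_elim (use assms(4) in \<open>auto simp: abs_mult intro: mult_right_mono\<close>)
  qed
  also have "\<dots> = K * integral\<^sup>L M (\<lambda>y. \<bar>\<phi> y\<bar>)" by simp
  finally show ?thesis .
qed

lemma approx_tendsto:
  fixes a :: "nat \<Rightarrow> 'a \<Rightarrow> real"
  assumes lim: "\<And>i. (a i \<longlongrightarrow> L i) F" and e: "e \<longlonglongrightarrow> 0"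
    and ba: "\<And>i s. \<bar>a i s - a' s\<bar> \<le> e i" and bL: "\<And>i. \<bar>L i - L'\<bar> \<le> e i"
  shows "(a' \<longlongrightarrow> L') F"
  unfolding tendsto_iff
proof (intro allI impI)
  fix \<epsilon> :: real assume ep: "\<epsilon> > 0"
  have ep3: "\<epsilon> / 3 > 0" using ep by simp
  have "eventually (\<lambda>i. dist (e i) 0 < \<epsilon> / 3) sequentially"
    using e ep3 tendsto_iff by blast
  then obtain i where i: "\<bar>e i\<bar> < \<epsilon> / 3" unfolding eventually_sequentially by auto
  have "eventually (\<lambda>s. dist (a i s) (L i) < \<epsilon> / 3) F"
    using lim[of i] ep3 tendsto_iff by blast
  then show "eventually (\<lambda>s. dist (a' s) L' < \<epsilon>) F"
  proof eventually_elim
    case (elim s)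
    have "\<bar>a' s - L'\<bar> \<le> \<bar>a i s - a' s\<bar> + \<bar>a i s - L i\<bar> + \<bar>L i - L'\<bar>" by linarith
    also have "\<dots> < \<epsilon>" using ba[of i s] bL[of i] i elim by (simp add: dist_real_def)
    finally show ?case by (simp add: dist_real_def)
  qed
qed


lemma exp_meas_leb: "(\<lambda>y::real. exp y) \<in> borel_measurable lebesgue"
  by (rule measurable_completion) simp

lemma wstar_exists:
  assumes f: "f \<in> Linf" and F: "ultrafilter F" and Fs: "eventually (\<lambda>s. 0 \<le> s) F"
  shows "\<exists>h. weak_star_lim F f h"
proof -
  have Fnb: "F \<noteq> bot" using F unfolding ultrafilter_def by simp
  obtain C N where C: "C \<ge> 0" "N \<in> null_sets lborel" "\<And>x. 0 \<le> x \<Longrightarrow> x \<notin> N \<Longrightarrow> \<bar>f x\<bar> \<le> C"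
    using Linf_bnd[OF f] by metis
  define cl where "cl x = max (- C) (min C x)" for x :: real
  have clb: "\<bar>cl x\<bar> \<le> C" for x using C(1) by (auto simp: cl_def)
  have clid: "\<bar>x\<bar> \<le> C \<Longrightarrow> cl x = x" for x by (auto simp: cl_def)
  have cl0: "cl 0 = 0" using C(1) by (simp add: cl_def)
  define g where "g s y = (if 0 \<le> s then cl (indicator {0..} y * f (y + s)) else 0)" for s y
  have gm: "g s \<in> borel_measurable lebesgue" for s
  proof (cases "0 \<le> s")
    case True
    have "(\<lambda>y. indicator {0..} y * f (y + s)) \<in> borel_measurable lebesgue"
      using Linf_meas[OF Linf_shift[OF f True]] .
    then have "(\<lambda>y. cl (indicator {0..} y * f (y + s))) \<in> borel_measurable lebesgue"
      unfolding cl_def by (intro borel_measurable_max borel_measurable_min borel_measurable_const)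
    moreover have "g s = (\<lambda>y. cl (indicator {0..} y * f (y + s)))" using True by (simp add: fun_eq_iff g_def)
    ultimately show ?thesis by simp
  next
    case False
    then have "g s = (\<lambda>y. 0)" by (simp add: fun_eq_iff g_def)
    then show ?thesis by simp
  qed
  have gmw: "g s \<in> borel_measurable Mw" for s using gm Mw_meas_iff by blast
  have gb: "\<bar>g s y\<bar> \<le> C" for s y using clb C(1) by (simp add: g_def)
  have gf: "g s y = indicator {0..} y * f (y + s)" if "0 \<le> s" "y \<notin> {x. x - (-s) \<in> N}" for s y
  proof (cases "0 \<le> y")
    case True
    then show ?thesis using C(3)[of "y + s"] that clid by (simp add: g_def)
  next
    case False
    then show ?thesis using that cl0 by (simp add: g_def)
  qed
  define k where "k s y = g s y + C" for s y
  have km: "k s \<in> borel_measurable lebesgue" for s unfolding k_def using gm by simp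
  have kb0: "0 \<le> k s y" for s y using gb[of s y] unfolding k_def by auto
  have kb1: "k s y \<le> 2 * C" for s y using gb[of s y] unfolding k_def by auto
  obtain d where d: "d \<in> borel_measurable lebesgue" "\<And>y. 0 \<le> d y" "integrable Mw d"
      "\<And>A. A \<in> sets lebesgue \<Longrightarrow> ((\<lambda>s. integral\<^sup>L Mw (\<lambda>y. indicator A y * k s y)) \<longlongrightarrow> integral\<^sup>L Mw (\<lambda>y. indicator A y * d y)) F"
    using ulim_density[of F k "2 * C", OF F km kb0 kb1] by blast
  have kmw: "k s \<in> borel_measurable Mw" for s using km Mw_meas_iff by blast
  have indint: "integrable Mw (\<lambda>y. indicator A y * c)" if "A \<in> sets lebesgue" for A and c :: real
    using that by (intro integrable_mult_left integrable_real_indicator) (auto simp: less_top[symmetric])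
  have kint: "integrable Mw (\<lambda>y. indicator A y * k s y)" if A: "A \<in> sets lebesgue" for A s
  proof (rule Mw.integrable_const_bound[where B="2 * C"])
    show "AE y in Mw. norm (indicator A y * k s y) \<le> 2 * C"
      by (rule AE_I2) (use kb0 kb1 C(1) in \<open>auto simp: indicator_def\<close>)
    show "(\<lambda>y. indicator A y * k s y) \<in> borel_measurable Mw"
      using A kmw by (intro borel_measurable_times borel_measurable_indicator) auto
  qed
  have dle: "AE y in Mw. d y \<le> 2 * C"
  proof (rule density_bound[OF d(1) d(3)])
    fix A :: "real set" assume A: "A \<in> sets lebesgue"
    have le: "integral\<^sup>L Mw (\<lambda>y. indicator A y * k s y) \<le> 2 * C * measure Mw A" for s
    proof -
      have "integral\<^sup>L Mw (\<lambda>y. indicator A y * k s y) \<le> integral\<^sup>L Mw (\<lambda>y. indicator A y * (2 * C))"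
        by (rule Bochner_Integration.integral_mono[OF kint[OF A] indint[OF A]]) (use kb1 in \<open>auto simp: indicator_def\<close>)
      also have "\<dots> = 2 * C * measure Mw A" using A by simp
      finally show ?thesis .
    qed
    show "integral\<^sup>L Mw (\<lambda>y. indicator A y * d y) \<le> 2 * C * measure Mw A"
      by (rule tendsto_upperbound[OF d(4)[OF A]]) (use le Fnb in auto)
  qed
  define h where "h y = d y - C" for y
  have hm: "h \<in> borel_measurable lebesgue" unfolding h_def using d(1) by simp
  have hmw: "h \<in> borel_measurable Mw" using hm Mw_meas_iff by blast
  have hb: "AE y in Mw. \<bar>h y\<bar> \<le> C" using dle by eventually_elim (use d(2) in \<open>auto simp: h_def abs_le_iff\<close>)
  have hL: "h \<in> Linf"
    unfolding Linf_def set_borel_measurable_def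
  proof (intro CollectI conjI exI)
    show "(\<lambda>x. indicator {0..} x *\<^sub>R h x) \<in> borel_measurable lebesgue"
      using hm by (intro borel_measurable_scaleR borel_measurable_indicator) auto
    show "AE x in lebesgue. 0 \<le> x \<longrightarrow> \<bar>h x\<bar> \<le> C" using hb unfolding AE_Mw .
  qed
  have baseA: "((\<lambda>s. integral\<^sup>L Mw (\<lambda>y. g s y * indicator A y)) \<longlongrightarrow> integral\<^sup>L Mw (\<lambda>y. h y * indicator A y)) F"
    if A: "A \<in> sets lebesgue" for A
  proof -
    have e1: "integral\<^sup>L Mw (\<lambda>y. g s y * indicator A y) = integral\<^sup>L Mw (\<lambda>y. indicator A y * k s y) - C * measure Mw A" for s
    proof -
      have "(\<lambda>y. g s y * indicator A y) = (\<lambda>y. indicator A y * k s y - indicator A y * C)"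
        unfolding k_def by (auto simp: fun_eq_iff algebra_simps)
      then show ?thesis using kint[OF A] indint[OF A] A by (simp add: mult.commute)
    qed
    have e2: "integral\<^sup>L Mw (\<lambda>y. h y * indicator A y) = integral\<^sup>L Mw (\<lambda>y. indicator A y * d y) - C * measure Mw A"
    proof -
      have "(\<lambda>y. h y * indicator A y) = (\<lambda>y. indicator A y * d y - indicator A y * C)"
        unfolding h_def by (auto simp: fun_eq_iff algebra_simps)
      moreover have "integrable Mw (\<lambda>y. indicator A y * d y)"
        using integrable_mult_indicator[of A Mw d] A d(3) by simp
      ultimately show ?thesis using indint[OF A] A by (simp add: mult.commute)
    qed
    show ?thesis unfolding e1 e2 by (intro tendsto_diff d(4)[OF A] tendsto_const)
  qed
  have gbAE: "AE y in Mw. \<bar>g s y\<bar> \<le> C" for s by (rule AE_I2) (rule gb)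
  have main: "((\<lambda>s. integral\<^sup>L Mw (\<lambda>y. g s y * \<phi> y)) \<longlongrightarrow> integral\<^sup>L Mw (\<lambda>y. h y * \<phi> y)) F"
    if "integrable Mw \<phi>" for \<phi>
    using that
  proof (induct rule: integrable_induct)
    case (base A c)
    then have A: "A \<in> sets lebesgue" by simp
    have e: "(\<lambda>y. b y * (indicator A y *\<^sub>R c)) = (\<lambda>y. c * (b y * indicator A y))" for b :: "real \<Rightarrow> real"
      by (auto simp: fun_eq_iff)
    show ?case unfolding e by (simp only: integral_mult_right_zero) (intro tendsto_mult_left baseA[OF A])
  next
    case (add \<phi>1 \<phi>2)
    have ig: "integrable Mw (\<lambda>y. g s y * \<phi>1 y)" "integrable Mw (\<lambda>y. g s y * \<phi>2 y)" for s
      using int_bmult[OF add(1) gmw[of s] gbAE[of s] C(1)] int_bmult[OF add(3) gmw[of s] gbAE[of s] C(1)] by auto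
    have ih: "integrable Mw (\<lambda>y. h y * \<phi>1 y)" "integrable Mw (\<lambda>y. h y * \<phi>2 y)"
      using int_bmult[OF add(1) hmw hb C(1)] int_bmult[OF add(3) hmw hb C(1)] by auto
    have e: "(\<lambda>y. b y * (\<phi>1 y + \<phi>2 y)) = (\<lambda>y. b y * \<phi>1 y + b y * \<phi>2 y)" for b :: "real \<Rightarrow> real"
      by (auto simp: fun_eq_iff algebra_simps)
    show ?case unfolding e using ig ih by (simp add: Bochner_Integration.integral_add tendsto_add add(2) add(4))
  next
    case (lim \<phi> si)
    define e where "e i = C * integral\<^sup>L Mw (\<lambda>y. \<bar>si i y - \<phi> y\<bar>)" for i
    have sim: "si i \<in> borel_measurable Mw" for i using lim(1) by auto
    have phim: "\<phi> \<in> borel_measurable Mw" using lim(5) by auto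
    have "(\<lambda>i. integral\<^sup>L Mw (\<lambda>y. \<bar>si i y - \<phi> y\<bar>)) \<longlonglongrightarrow> integral\<^sup>L Mw (\<lambda>y. 0)"
    proof (rule integral_dominated_convergence[where w="\<lambda>y. 3 * \<bar>\<phi> y\<bar>"])
      show "integrable Mw (\<lambda>y. 3 * \<bar>\<phi> y\<bar>)" using lim(5) by auto
      show "(\<lambda>y. 0::real) \<in> borel_measurable Mw" by simp
      show "(\<lambda>y. \<bar>si i y - \<phi> y\<bar>) \<in> borel_measurable Mw" for i using sim phim by auto
      show "AE y in Mw. (\<lambda>i. \<bar>si i y - \<phi> y\<bar>) \<longlonglongrightarrow> 0"
      proof (rule AE_I2)
        fix y :: real
        have "(\<lambda>i. si i y - \<phi> y) \<longlonglongrightarrow> \<phi> y - \<phi> y" using lim(3)[of y] by (intro tendsto_intros) auto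
        then have "(\<lambda>i. \<bar>si i y - \<phi> y\<bar>) \<longlonglongrightarrow> \<bar>\<phi> y - \<phi> y\<bar>" by (rule tendsto_rabs)
        then show "(\<lambda>i. \<bar>si i y - \<phi> y\<bar>) \<longlonglongrightarrow> 0" by simp
      qed
      show "AE y in Mw. norm \<bar>si i y - \<phi> y\<bar> \<le> 3 * \<bar>\<phi> y\<bar>" for i
      proof (rule AE_I2)
        fix y
        have "\<bar>si i y\<bar> \<le> 2 * \<bar>\<phi> y\<bar>" using lim(4)[of y i] by simp
        then show "norm \<bar>si i y - \<phi> y\<bar> \<le> 3 * \<bar>\<phi> y\<bar>" by simp
      qed
    qed
    then have e0: "e \<longlonglongrightarrow> 0" unfolding e_def using tendsto_mult_left[of _ 0 sequentially C] by simp
    have idiff: "integrable Mw (\<lambda>y. si i y - \<phi> y)" for i using lim(1) lim(5) by auto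
    show ?case
    proof (rule approx_tendsto[OF lim(2) e0])
      fix i s
      have "integral\<^sup>L Mw (\<lambda>y. g s y * si i y) - integral\<^sup>L Mw (\<lambda>y. g s y * \<phi> y) = integral\<^sup>L Mw (\<lambda>y. g s y * (si i y - \<phi> y))"
        using int_bmult[OF lim(1)[of i] gmw[of s] gbAE[of s] C(1)] int_bmult[OF lim(5) gmw[of s] gbAE[of s] C(1)]
        by (simp add: right_diff_distrib)
      also have "\<bar>\<dots>\<bar> \<le> e i" unfolding e_def by (rule int_bmult_bound[OF idiff[of i] gmw[of s] gbAE[of s] C(1)])
      finally show "\<bar>integral\<^sup>L Mw (\<lambda>y. g s y * si i y) - integral\<^sup>L Mw (\<lambda>y. g s y * \<phi> y)\<bar> \<le> e i" .
    next
      fix i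
      have "integral\<^sup>L Mw (\<lambda>y. h y * si i y) - integral\<^sup>L Mw (\<lambda>y. h y * \<phi> y) = integral\<^sup>L Mw (\<lambda>y. h y * (si i y - \<phi> y))"
        using int_bmult[OF lim(1)[of i] hmw hb C(1)] int_bmult[OF lim(5) hmw hb C(1)]
        by (simp add: right_diff_distrib)
      also have "\<bar>\<dots>\<bar> \<le> e i" unfolding e_def by (rule int_bmult_bound[OF idiff[of i] hmw hb C(1)])
      finally show "\<bar>integral\<^sup>L Mw (\<lambda>y. h y * si i y) - integral\<^sup>L Mw (\<lambda>y. h y * \<phi> y)\<bar> \<le> e i" .
    qed
  qed
  show ?thesis
  proof (intro exI, unfold weak_star_lim_def, intro conjI allI impI)
    show "h \<in> Linf" by (rule hL)
    fix g0 :: "real \<Rightarrow> real" assume g0: "set_integrable lebesgue {0..} g0"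
    define \<phi> where "\<phi> y = indicator {0..} y * g0 y * exp y" for y
    have g0i: "integrable lebesgue (\<lambda>y. indicator {0..} y * g0 y)" using g0 unfolding set_integrable_def by simp
    have g0m: "(\<lambda>y. indicator {0..} y * g0 y) \<in> borel_measurable lebesgue" using g0i by auto
    have \<phi>m: "\<phi> \<in> borel_measurable lebesgue" unfolding \<phi>_def using g0m exp_meas_leb by simp
    have w\<phi>: "wt y * \<phi> y = indicator {0..} y * g0 y" for y
      unfolding wt_def \<phi>_def by (auto simp: indicator_def exp_minus field_simps)
    have \<phi>i: "integrable Mw \<phi>" using integrable_Mw[OF \<phi>m] w\<phi> g0i by simp
    have conv: "((\<lambda>s. integral\<^sup>L Mw (\<lambda>y. g s y * \<phi> y)) \<longlongrightarrow> integral\<^sup>L Mw (\<lambda>y. h y * \<phi> y)) F"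
      by (rule main[OF \<phi>i])
    have L: "integral\<^sup>L Mw (\<lambda>y. h y * \<phi> y) = (LINT y:{0..}|lebesgue. h y * g0 y)"
    proof -
      have "integral\<^sup>L Mw (\<lambda>y. h y * \<phi> y) = integral\<^sup>L lebesgue (\<lambda>y. wt y * (h y * \<phi> y))"
        using hm \<phi>m by (intro integral_Mw) simp
      also have "(\<lambda>y. wt y * (h y * \<phi> y)) = (\<lambda>y. indicator {0..} y *\<^sub>R (h y * g0 y))"
      proof
        fix y
        have "wt y * (h y * \<phi> y) = h y * (wt y * \<phi> y)" by (simp only: ac_simps)
        also have "\<dots> = indicator {0..} y *\<^sub>R (h y * g0 y)" unfolding w\<phi> by (simp only: ac_simps real_scaleR_def)
        finally show "wt y * (h y * \<phi> y) = indicator {0..} y *\<^sub>R (h y * g0 y)" .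
      qed
      finally show ?thesis unfolding set_lebesgue_integral_def .
    qed
    have R: "integral\<^sup>L Mw (\<lambda>y. g s y * \<phi> y) = (LINT y:{0..}|lebesgue. f (y + s) * g0 y)" if s: "0 \<le> s" for s
    proof -
      have "integral\<^sup>L Mw (\<lambda>y. g s y * \<phi> y) = integral\<^sup>L lebesgue (\<lambda>y. wt y * (g s y * \<phi> y))"
        using gm \<phi>m by (intro integral_Mw) simp
      also have "(\<lambda>y. wt y * (g s y * \<phi> y)) = (\<lambda>y. g s y * (indicator {0..} y * g0 y))"
      proof
        fix y
        have "wt y * (g s y * \<phi> y) = g s y * (wt y * \<phi> y)" by (simp only: ac_simps)
        then show "wt y * (g s y * \<phi> y) = g s y * (indicator {0..} y * g0 y)" unfolding w\<phi> .
      qed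
      also have "integral\<^sup>L lebesgue (\<lambda>y. g s y * (indicator {0..} y * g0 y)) =
          integral\<^sup>L lebesgue (\<lambda>y. (indicator {0..} y * f (y + s)) * (indicator {0..} y * g0 y))"
      proof (rule integral_cong_AE)
        show "(\<lambda>y. g s y * (indicator {0..} y * g0 y)) \<in> borel_measurable lebesgue" using gm g0m by simp
        show "(\<lambda>y. (indicator {0..} y * f (y + s)) * (indicator {0..} y * g0 y)) \<in> borel_measurable lebesgue"
          using Linf_meas[OF Linf_shift[OF f s]] g0m by simp
        show "AE y in lebesgue. g s y * (indicator {0..} y * g0 y) = (indicator {0..} y * f (y + s)) * (indicator {0..} y * g0 y)"
          by (rule AE_lebesgue_notin[OF null_sets_translation[OF C(2), of "-s"]]) (use gf s in auto)
      qed
      also have "(\<lambda>y. (indicator {0..} y * f (y + s)) * (indicator {0..} y * g0 y)) = (\<lambda>y. indicator {0..} y *\<^sub>R (f (y + s) * g0 y))"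
        by (auto simp: fun_eq_iff indicator_def)
      finally show ?thesis unfolding set_lebesgue_integral_def .
    qed
    show "((\<lambda>s. LINT y:{0..}|lebesgue. f (y + s) * g0 y) \<longlongrightarrow> (LINT y:{0..}|lebesgue. h y * g0 y)) F"
      by (rule Lim_transform_eventually[OF conv[unfolded L]]) (use Fs R in \<open>auto elim!: eventually_mono\<close>)
  qed
qed


definition Jf :: "nat filter \<Rightarrow> real \<Rightarrow> (real \<Rightarrow> real) \<Rightarrow> real \<Rightarrow> real" where
  "Jf \<eta> t f x = prim (f_omega \<eta> t f) x"

lemma omega_props:
  assumes "ultrafilter \<eta>" "\<eta> \<le> sequentially" "0 \<le> t"
  shows "ultrafilter (omega_filter \<eta> t)" "eventually (\<lambda>s. 0 \<le> s) (omega_filter \<eta> t)"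
    "\<And>X. eventually (\<lambda>s. X \<le> s) (omega_filter \<eta> t)"
proof -
  show "ultrafilter (omega_filter \<eta> t)" unfolding omega_filter_def by (rule ultrafilter_filtermap[OF assms(1)])
  show "eventually (\<lambda>s. 0 \<le> s) (omega_filter \<eta> t)" unfolding omega_filter_def eventually_filtermap
    using assms(3) by simp
  fix X :: real
  have "eventually (\<lambda>n. nat \<lceil>X\<rceil> \<le> n) sequentially" by (rule eventually_ge_at_top)
  then have "eventually (\<lambda>n. nat \<lceil>X\<rceil> \<le> n) \<eta>" by (rule filter_leD[OF assms(2)])
  then show "eventually (\<lambda>s. X \<le> s) (omega_filter \<eta> t)" unfolding omega_filter_def eventually_filtermap
  proof (rule eventually_mono)
    fix n :: nat assume "nat \<lceil>X\<rceil> \<le> n"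
    then have "X \<le> real n" by linarith
    then show "X \<le> real n + t" using assms(3) by simp
  qed
qed

lemma fomega_wsl:
  assumes "ultrafilter \<eta>" "\<eta> \<le> sequentially" "0 \<le> t" "f \<in> Linf"
  shows "weak_star_lim (omega_filter \<eta> t) f (f_omega \<eta> t f)"
proof -
  have "\<exists>h. weak_star_lim (omega_filter \<eta> t) f h"
    by (rule wstar_exists[OF assms(4) omega_props(1)[OF assms(1-3)] omega_props(2)[OF assms(1-3)]])
  from someI_ex[OF this] show ?thesis unfolding f_omega_def .
qed

lemma set_int_indicator_Icc:
  fixes q :: "real \<Rightarrow> real"
  assumes "0 \<le> x"
  shows "(LINT y:{0..}|lebesgue. q y * indicator {0..x} y) = (LINT y:{0..x}|lebesgue. q y)"
  unfolding set_lebesgue_integral_def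
  by (rule arg_cong[where f="integral\<^sup>L lebesgue"]) (auto simp: fun_eq_iff indicator_def)

lemma J_tendsto:
  assumes "ultrafilter \<eta>" "\<eta> \<le> sequentially" "0 \<le> t" and f: "f \<in> Linf" and x: "0 \<le> x"
  shows "((\<lambda>s. prim f (s + x) - prim f s) \<longlongrightarrow> Jf \<eta> t f x) (omega_filter \<eta> t)"
proof -
  have w: "weak_star_lim (omega_filter \<eta> t) f (f_omega \<eta> t f)" by (rule fomega_wsl[OF assms(1-4)])
  have si: "set_integrable lebesgue {0..} (indicator {0..x} :: real \<Rightarrow> real)"
  proof -
    have "integrable lebesgue (indicator {0..x} :: real \<Rightarrow> real)"
      by (rule integrable_real_indicator) (use x in auto)
    moreover have "(\<lambda>y. indicator {0..} y *\<^sub>R indicator {0..x} y) = (indicator {0..x} :: real \<Rightarrow> real)"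
      using x by (auto simp: fun_eq_iff indicator_def)
    ultimately show ?thesis unfolding set_integrable_def by simp
  qed
  have "((\<lambda>s. LINT y:{0..}|lebesgue. f (y + s) * indicator {0..x} y) \<longlongrightarrow>
        (LINT y:{0..}|lebesgue. f_omega \<eta> t f y * indicator {0..x} y)) (omega_filter \<eta> t)"
    using w si unfolding weak_star_lim_def by blast
  then have "((\<lambda>s. LINT y:{0..x}|lebesgue. f (y + s)) \<longlongrightarrow> Jf \<eta> t f x) (omega_filter \<eta> t)"
    unfolding set_int_indicator_Icc[OF x] Jf_def prim_def .
  then show ?thesis
    by (rule Lim_transform_eventually)
       (use omega_props(2)[OF assms(1-3)] in \<open>auto elim!: eventually_mono simp: Linf_shift_int[OF f _ x]\<close>)
qed


locale omg =
  fixes \<eta> :: "nat filter" and t :: real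
  assumes U: "ultrafilter \<eta>" and S: "\<eta> \<le> sequentially" and T: "0 \<le> t"
begin

abbreviation "Om \<equiv> omega_filter \<eta> t"

lemma Om_nb: "Om \<noteq> bot" using omega_props(1)[OF U S T] unfolding ultrafilter_def by simp

lemma Jt: "f \<in> Linf \<Longrightarrow> 0 \<le> x \<Longrightarrow> ((\<lambda>s. prim f (s + x) - prim f s) \<longlongrightarrow> Jf \<eta> t f x) Om"
  by (rule J_tendsto[OF U S T])

lemma Om_ev0: "eventually (\<lambda>s. 0 \<le> s) Om" by (rule omega_props(2)[OF U S T])

lemma J_add:
  assumes f: "f \<in> Linf" and g: "g \<in> Linf" and x: "0 \<le> x"
  shows "Jf \<eta> t (\<lambda>y. f y + g y) x = Jf \<eta> t f x + Jf \<eta> t g x"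
proof -
  have "((\<lambda>s. (prim f (s + x) - prim f s) + (prim g (s + x) - prim g s)) \<longlongrightarrow> Jf \<eta> t f x + Jf \<eta> t g x) Om"
    by (intro tendsto_add Jt f g x)
  then have "((\<lambda>s. prim (\<lambda>y. f y + g y) (s + x) - prim (\<lambda>y. f y + g y) s) \<longlongrightarrow> Jf \<eta> t f x + Jf \<eta> t g x) Om"
    by (rule Lim_transform_eventually) (use Om_ev0 x in \<open>auto elim!: eventually_mono simp: prim_add[OF f g]\<close>)
  then show ?thesis using Jt[OF Linf_add[OF f g] x] tendsto_unique[OF Om_nb] by blast
qed

lemma J_cmult:
  assumes f: "f \<in> Linf" and x: "0 \<le> x"
  shows "Jf \<eta> t (\<lambda>y. c * f y) x = c * Jf \<eta> t f x"
proof -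
  have "((\<lambda>s. c * (prim f (s + x) - prim f s)) \<longlongrightarrow> c * Jf \<eta> t f x) Om"
    by (intro tendsto_mult_left Jt f x)
  then have "((\<lambda>s. prim (\<lambda>y. c * f y) (s + x) - prim (\<lambda>y. c * f y) s) \<longlongrightarrow> c * Jf \<eta> t f x) Om"
    by (simp add: prim_cmult right_diff_distrib)
  then show ?thesis using Jt[OF Linf_cmult[OF f] x] tendsto_unique[OF Om_nb] by blast
qed

lemma J_const:
  assumes x: "0 \<le> x"
  shows "Jf \<eta> t (\<lambda>y. c) x = c * x"
proof -
  have "((\<lambda>s. prim (\<lambda>y. c) (s + x) - prim (\<lambda>y. c) s) \<longlongrightarrow> c * x) Om"
    by (rule Lim_transform_eventually[OF tendsto_const])
       (use Om_ev0 x in \<open>auto elim!: eventually_mono simp: prim_const algebra_simps\<close>)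
  then show ?thesis using Jt[OF Linf_const x] tendsto_unique[OF Om_nb] by blast
qed

lemma J_nonneg:
  assumes f: "f \<in> Linf" and pos: "AE x in lebesgue. x \<ge> 0 \<longrightarrow> f x \<ge> 0" and x: "0 \<le> x"
  shows "0 \<le> Jf \<eta> t f x"
  by (rule tendsto_lowerbound[OF Jt[OF f x]])
     (use Om_ev0 prim_nonneg[OF f pos] x Om_nb in \<open>auto elim!: eventually_mono\<close>)

lemma J_diff_tendsto:
  assumes f: "f \<in> Linf" and ab: "0 \<le> a" "a \<le> b"
  shows "((\<lambda>s. prim f (s + b) - prim f (s + a)) \<longlongrightarrow> Jf \<eta> t f b - Jf \<eta> t f a) Om"
proof -
  have "((\<lambda>s. (prim f (s + b) - prim f s) - (prim f (s + a) - prim f s)) \<longlongrightarrow> Jf \<eta> t f b - Jf \<eta> t f a) Om"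
    using ab by (intro tendsto_diff Jt f) auto
  then show ?thesis by simp
qed

lemma J_lip:
  assumes f: "f \<in> Linf" and C: "\<And>a b. 0 \<le> a \<Longrightarrow> a \<le> b \<Longrightarrow> \<bar>prim f b - prim f a\<bar> \<le> C * (b - a)"
    and ab: "0 \<le> a" "a \<le> b"
  shows "\<bar>Jf \<eta> t f b - Jf \<eta> t f a\<bar> \<le> C * (b - a)"
proof -
  have "((\<lambda>s. \<bar>prim f (s + b) - prim f (s + a)\<bar>) \<longlongrightarrow> \<bar>Jf \<eta> t f b - Jf \<eta> t f a\<bar>) Om"
    by (intro tendsto_rabs J_diff_tendsto f ab)
  moreover have "eventually (\<lambda>s. \<bar>prim f (s + b) - prim f (s + a)\<bar> \<le> C * (b - a)) Om"
    using Om_ev0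
  proof (rule eventually_mono)
    fix s :: real assume "0 \<le> s"
    then show "\<bar>prim f (s + b) - prim f (s + a)\<bar> \<le> C * (b - a)" using C[of "s + a" "s + b"] ab by simp
  qed
  ultimately show ?thesis using Om_nb by (intro tendsto_upperbound) auto
qed

lemma J_zero: assumes f: "f \<in> Linf" shows "Jf \<eta> t f 0 = 0"
proof -
  have "((\<lambda>s. prim f (s + 0) - prim f s) \<longlongrightarrow> 0) Om" by simp
  then show ?thesis using Jt[OF f order_refl] tendsto_unique[OF Om_nb] by blast
qed

lemma J_win:
  assumes f: "f \<in> Linf" and X: "\<And>x. x \<ge> X \<Longrightarrow> prim f (x + \<theta>) - prim f x \<le> \<theta> * B"
    and a: "0 \<le> a" and th: "0 < \<theta>"
  shows "Jf \<eta> t f (a + \<theta>) - Jf \<eta> t f a \<le> \<theta> * B"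
proof (rule tendsto_upperbound[OF J_diff_tendsto[OF f a]])
  show "eventually (\<lambda>s. prim f (s + (a + \<theta>)) - prim f (s + a) \<le> \<theta> * B) Om"
    using omega_props(3)[OF U S T, of X]
  proof (rule eventually_mono)
    fix s assume "X \<le> s"
    then have "prim f (s + a + \<theta>) - prim f (s + a) \<le> \<theta> * B" using X[of "s + a"] a by simp
    then show "prim f (s + (a + \<theta>)) - prim f (s + a) \<le> \<theta> * B" by (simp add: add.assoc)
  qed
qed (use th Om_nb in auto)

end


locale omgU = omg +
  fixes U :: "real filter"
  assumes UU: "ultrafilter U" and Ua: "U \<le> at_top"
begin

lemma U_nb: "U \<noteq> bot" using UU unfolding ultrafilter_def by simp

lemma U_ev: "eventually (\<lambda>x. X \<le> x) U" by (rule filter_leD[OF Ua eventually_ge_at_top])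

lemma q_tendsto:
  assumes f: "f \<in> Linf"
  shows "((\<lambda>x. (1 / x) * Jf \<eta> t f x) \<longlongrightarrow> qfun \<eta> t U f) U"
proof -
  obtain C where C: "C \<ge> 0" "\<And>a b. 0 \<le> a \<Longrightarrow> a \<le> b \<Longrightarrow> \<bar>prim f b - prim f a\<bar> \<le> C * (b - a)"
    using Linf_C[OF f] by metis
  have "eventually (\<lambda>x. (1 / x) * Jf \<eta> t f x \<in> {-C..C}) U"
    using U_ev[of 1]
  proof (rule eventually_mono)
    fix x :: real assume x: "1 \<le> x"
    have "\<bar>Jf \<eta> t f x - Jf \<eta> t f 0\<bar> \<le> C * (x - 0)" by (rule J_lip[OF f C(2)]) (use x in auto)
    then have "\<bar>Jf \<eta> t f x\<bar> \<le> C * x" using J_zero[OF f] by simp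
    then have "\<bar>(1 / x) * Jf \<eta> t f x\<bar> \<le> C" using x by (simp add: abs_mult divide_le_eq mult.commute)
    then show "(1 / x) * Jf \<eta> t f x \<in> {-C..C}" unfolding atLeastAtMost_iff abs_le_iff by linarith
  qed
  then obtain L where L: "((\<lambda>x. (1 / x) * Jf \<eta> t f x) \<longlongrightarrow> L) U"
    using ultrafilter_converges[OF UU, of "\<lambda>x. (1 / x) * Jf \<eta> t f x" "-C" C] by blast
  have "qfun \<eta> t U f = L" unfolding qfun_def using f L U_nb
    by (simp add: Jf_def prim_def tendsto_Lim)
  then show ?thesis using L by simp
qed

lemma q_M1: "qfun \<eta> t U \<in> M1"
  unfolding M1_def
proof (intro CollectI conjI allI impI ballI)
  fix f :: "real \<Rightarrow> real" assume "f \<notin> Linf" then show "qfun \<eta> t U f = 0" by (simp add: qfun_def)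
next
  fix f g :: "real \<Rightarrow> real" assume f: "f \<in> Linf" and g: "g \<in> Linf"
  have "((\<lambda>x. (1 / x) * Jf \<eta> t f x + (1 / x) * Jf \<eta> t g x) \<longlongrightarrow> qfun \<eta> t U f + qfun \<eta> t U g) U"
    by (intro tendsto_add q_tendsto f g)
  then have "((\<lambda>x. (1 / x) * Jf \<eta> t (\<lambda>y. f y + g y) x) \<longlongrightarrow> qfun \<eta> t U f + qfun \<eta> t U g) U"
    by (rule Lim_transform_eventually) (use U_ev[of 0] in \<open>auto elim!: eventually_mono simp: J_add[OF f g] add_divide_distrib\<close>)
  then show "qfun \<eta> t U (\<lambda>x. f x + g x) = qfun \<eta> t U f + qfun \<eta> t U g"
    using q_tendsto[OF Linf_add[OF f g]] tendsto_unique[OF U_nb] by blast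
next
  fix f :: "real \<Rightarrow> real" and c :: real assume f: "f \<in> Linf"
  have "((\<lambda>x. c * ((1 / x) * Jf \<eta> t f x)) \<longlongrightarrow> c * qfun \<eta> t U f) U"
    by (intro tendsto_mult_left q_tendsto f)
  then have "((\<lambda>x. (1 / x) * Jf \<eta> t (\<lambda>y. c * f y) x) \<longlongrightarrow> c * qfun \<eta> t U f) U"
  proof (rule Lim_transform_eventually)
    show "eventually (\<lambda>x. c * ((1 / x) * Jf \<eta> t f x) = (1 / x) * Jf \<eta> t (\<lambda>y. c * f y) x) U"
      using U_ev[of 0]
    proof (rule eventually_mono)
      fix x :: real assume "0 \<le> x"
      then show "c * ((1 / x) * Jf \<eta> t f x) = (1 / x) * Jf \<eta> t (\<lambda>y. c * f y) x"
        using J_cmult[OF f, of x c] by simp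
    qed
  qed
  then show "qfun \<eta> t U (\<lambda>x. c * f x) = c * qfun \<eta> t U f"
    using q_tendsto[OF Linf_cmult[OF f]] tendsto_unique[OF U_nb] by blast
next
  fix f :: "real \<Rightarrow> real" assume f: "f \<in> Linf" and pos: "AE x in lebesgue. 0 \<le> x \<longrightarrow> 0 \<le> f x"
  have "eventually (\<lambda>x. 0 \<le> (1 / x) * Jf \<eta> t f x) U"
    using U_ev[of 0]
  proof (rule eventually_mono)
    fix x :: real assume "0 \<le> x"
    then show "0 \<le> (1 / x) * Jf \<eta> t f x" using J_nonneg[OF f pos, of x] by simp
  qed
  then show "0 \<le> qfun \<eta> t U f"
    using tendsto_lowerbound[OF q_tendsto[OF f]] U_nb by blast
next
  have "((\<lambda>x. (1 / x) * Jf \<eta> t (\<lambda>y. 1) x) \<longlongrightarrow> 1) U"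
    by (rule Lim_transform_eventually[OF tendsto_const]) (use U_ev[of 1] in \<open>auto elim!: eventually_mono simp: J_const\<close>)
  then show "qfun \<eta> t U (\<lambda>_. 1) = 1" using q_tendsto[OF Linf_const] tendsto_unique[OF U_nb] by blast
next
  fix f :: "real \<Rightarrow> real" assume f: "f \<in> Linf"
  obtain M where M: "upper_mean f = ereal M"
    "\<And>\<epsilon>. \<epsilon> > 0 \<Longrightarrow> \<exists>\<theta>>0. \<exists>X\<ge>0. \<forall>x\<ge>X. prim f (x + \<theta>) - prim f x \<le> \<theta> * (M + \<epsilon>)"
    using upper_mean_props[OF f] by metis
  obtain C where C: "C \<ge> 0" "\<And>a b. 0 \<le> a \<Longrightarrow> a \<le> b \<Longrightarrow> \<bar>prim f b - prim f a\<bar> \<le> C * (b - a)"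
    using Linf_C[OF f] by metis
  have "qfun \<eta> t U f \<le> M"
  proof (rule field_le_epsilon)
    fix \<epsilon> :: real assume e: "0 < \<epsilon>"
    obtain \<theta> X where th: "\<theta> > 0" "X \<ge> 0" "\<And>x. x \<ge> X \<Longrightarrow> prim f (x + \<theta>) - prim f x \<le> \<theta> * (M + \<epsilon>)"
      using M(2)[OF e] by blast
    define B where "B = M + \<epsilon>"
    define K where "K = \<theta> * (C + \<bar>B\<bar>)"
    have bnd: "(1 / x) * Jf \<eta> t f x \<le> B + K / x" if x: "1 \<le> x" for x
    proof -
      have "Jf \<eta> t f (0 + x) - Jf \<eta> t f 0 \<le> x * B + \<theta> * (C + \<bar>B\<bar>)"
      proof (rule window_sum[OF th(1)])
        fix a :: real assume "0 \<le> a"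
        then show "Jf \<eta> t f (a + \<theta>) - Jf \<eta> t f a \<le> \<theta> * B"
          unfolding B_def using J_win[OF f th(3) _ th(1)] by blast
      next
        fix a b :: real assume "0 \<le> a" "a \<le> b"
        then show "\<bar>Jf \<eta> t f b - Jf \<eta> t f a\<bar> \<le> C * (b - a)" using J_lip[OF f C(2)] by blast
      qed (use x in simp)
      then have "Jf \<eta> t f x \<le> x * B + K" using J_zero[OF f] unfolding K_def by simp
      then have "Jf \<eta> t f x / x \<le> (x * B + K) / x" using x by (simp add: divide_right_mono)
      also have "\<dots> = B + K / x" using x by (simp add: field_simps)
      finally show ?thesis by simp
    qed
    have "((\<lambda>x. B + K / x) \<longlongrightarrow> B + 0) at_top"
      by (intro tendsto_add tendsto_const tendsto_divide_0[OF tendsto_const]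
          filterlim_at_top_imp_at_infinity filterlim_ident)
    then have lB: "((\<lambda>x. B + K / x) \<longlongrightarrow> B) U" using tendsto_mono[OF Ua] by simp
    have ev: "eventually (\<lambda>x. (1 / x) * Jf \<eta> t f x \<le> B + K / x) U"
      using U_ev[of 1] by (rule eventually_mono) (rule bnd)
    have "qfun \<eta> t U f \<le> B"
      using tendsto_le[OF _ lB q_tendsto[OF f] ev] U_nb by simp
    then show "qfun \<eta> t U f \<le> M + \<epsilon>" unfolding B_def .
  qed
  then show "ereal (qfun \<eta> t U f) \<le> upper_mean f" using M(1) by simp
qed

end

lemma Q1_M1: "Q1 \<subseteq> M1"
proof
  fix q assume "q \<in> Q1"
  then obtain \<eta> t U where q: "q = qfun \<eta> t U" "ultrafilter \<eta>" "\<eta> \<le> sequentially" "0 \<le> t" "ultrafilter U" "U \<le> at_top"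
    unfolding Q1_def by blast
  interpret omgU \<eta> t U by unfold_locales (use q in auto)
  show "q \<in> M1" using q_M1 q(1) by simp
qed


lemma rising_sun:
  fixes P :: "real \<Rightarrow> real"
  assumes C: "C \<ge> 0" "\<And>a b. 0 \<le> a \<Longrightarrow> a \<le> b \<Longrightarrow> \<bar>P b - P a\<bar> \<le> C * (b - a)"
    and M: "\<And>\<theta> \<epsilon> T. \<theta> > 0 \<Longrightarrow> \<epsilon> > 0 \<Longrightarrow> \<exists>x\<ge>T. x \<ge> 0 \<and> P (x + \<theta>) - P x \<ge> \<theta> * (M - \<epsilon>)"
    and e: "\<epsilon> > 0" and th: "\<theta> > 0"
  shows "\<exists>a\<ge>T. a \<ge> 0 \<and> (\<forall>y\<in>{0..\<theta>}. P (a + y) - P a \<ge> (M - 2 * \<epsilon>) * y)"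
proof -
  define K where "K = C + \<bar>M - 2 * \<epsilon>\<bar>"
  define \<Theta> where "\<Theta> = K * \<theta> / \<epsilon> + \<theta>"
  have K0: "K \<ge> 0" unfolding K_def using C(1) by simp
  have Tp: "\<Theta> > 0" unfolding \<Theta>_def using K0 e th by (simp add: add_nonneg_pos)
  have eT: "\<epsilon> * \<Theta> = K * \<theta> + \<epsilon> * \<theta>" unfolding \<Theta>_def using e by (simp add: field_simps)
  obtain x0 where x0: "x0 \<ge> T" "x0 \<ge> 0" "P (x0 + \<Theta>) - P x0 \<ge> \<Theta> * (M - \<epsilon>)"
    using M[OF Tp e, of T] by blast
  define D where "D y = P (x0 + y) - P x0 - (M - 2 * \<epsilon>) * y" for y
  have Dlip: "\<bar>D b - D a\<bar> \<le> K * (b - a)" if ab: "0 \<le> a" "a \<le> b" for a b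
  proof -
    have eq: "D b - D a = (P (x0 + b) - P (x0 + a)) - (M - 2 * \<epsilon>) * (b - a)" by (simp add: D_def algebra_simps)
    have p: "\<bar>P (x0 + b) - P (x0 + a)\<bar> \<le> C * (b - a)" using C(2)[of "x0 + a" "x0 + b"] ab x0 by simp
    have m: "\<bar>(M - 2 * \<epsilon>) * (b - a)\<bar> = \<bar>M - 2 * \<epsilon>\<bar> * (b - a)" using ab by (simp add: abs_mult)
    have "\<bar>D b - D a\<bar> \<le> \<bar>P (x0 + b) - P (x0 + a)\<bar> + \<bar>(M - 2 * \<epsilon>) * (b - a)\<bar>" unfolding eq by (rule abs_triangle_ineq4)
    also have "\<dots> \<le> C * (b - a) + \<bar>M - 2 * \<epsilon>\<bar> * (b - a)" using p m by simp
    also have "\<dots> = K * (b - a)" unfolding K_def by (simp add: algebra_simps)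
    finally show ?thesis .
  qed
  have cont: "continuous_on {0..\<Theta>} D"
  proof (rule lipschitz_on_continuous_on)
    show "K-lipschitz_on {0..\<Theta>} D"
    proof (rule lipschitz_onI)
      fix x y assume xy: "x \<in> {0..\<Theta>}" "y \<in> {0..\<Theta>}"
      show "dist (D x) (D y) \<le> K * dist x y"
      proof (cases "x \<le> y")
        case True
        then show ?thesis using Dlip[of x y] xy by (simp add: dist_real_def abs_minus_commute)
      next
        case False
        then show ?thesis using Dlip[of y x] xy by (simp add: dist_real_def abs_minus_commute)
      qed
    qed (rule K0)
  qed
  obtain a0 where a0: "a0 \<in> {0..\<Theta>}" "\<And>y. y \<in> {0..\<Theta>} \<Longrightarrow> D a0 \<le> D y"
    using continuous_attains_inf[OF compact_Icc _ cont] Tp by auto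
  have D0: "D 0 = 0" by (simp add: D_def)
  have DT: "D \<Theta> \<ge> \<epsilon> * \<Theta>" using x0(3) by (simp add: D_def algebra_simps)
  have gap: "\<Theta> - a0 \<ge> \<theta>"
  proof (rule ccontr)
    assume "\<not> ?thesis"
    then have lt: "\<Theta> - a0 < \<theta>" by simp
    have "D \<Theta> - D a0 \<le> K * (\<Theta> - a0)" using Dlip[of a0 \<Theta>] a0(1) by auto
    also have "\<dots> \<le> K * \<theta>" using lt K0 by (simp add: mult_left_mono)
    finally have 1: "D \<Theta> - D a0 \<le> K * \<theta>" .
    have 2: "D a0 \<le> 0" using a0(2)[of 0] D0 Tp by simp
    have 3: "\<epsilon> * \<theta> > 0" using e th by simp
    show False using 1 2 3 DT eT by linarith
  qed
  show ?thesis
  proof (intro exI[of _ "x0 + a0"] conjI ballI)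
    show "T \<le> x0 + a0" "0 \<le> x0 + a0" using x0 a0(1) by auto
    fix y assume y: "y \<in> {0..\<theta>}"
    have "D a0 \<le> D (a0 + y)" using a0 gap y by auto
    then show "(M - 2 * \<epsilon>) * y \<le> P (x0 + a0 + y) - P (x0 + a0)" by (simp add: D_def algebra_simps)
  qed
qed

lemma int_seq:
  fixes P :: "real \<Rightarrow> real"
  assumes C: "C \<ge> 0" "\<And>a b. 0 \<le> a \<Longrightarrow> a \<le> b \<Longrightarrow> \<bar>P b - P a\<bar> \<le> C * (b - a)"
    and M: "\<And>\<theta> \<epsilon> T. \<theta> > 0 \<Longrightarrow> \<epsilon> > 0 \<Longrightarrow> \<exists>x\<ge>T. x \<ge> 0 \<and> P (x + \<theta>) - P x \<ge> \<theta> * (M - \<epsilon>)"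
  shows "\<exists>n::nat. n \<ge> k \<and> (\<forall>y\<in>{0..real k}. P (real n + y) - P (real n) \<ge> (M - 2 / (real k + 1)) * y - (C + \<bar>M\<bar> + 2))"
proof -
  define \<epsilon> where "\<epsilon> = 1 / (real k + 1)"
  have e: "\<epsilon> > 0" "\<epsilon> \<le> 1" unfolding \<epsilon>_def by (auto simp: field_simps)
  have e2: "2 * \<epsilon> = 2 / (real k + 1)" unfolding \<epsilon>_def by simp
  obtain a where a: "a \<ge> real k" "a \<ge> 0" "\<And>y. y \<in> {0..real k + 1} \<Longrightarrow> P (a + y) - P a \<ge> (M - 2 * \<epsilon>) * y"
    using rising_sun[OF C M e(1), of "real k + 1" "real k"] by auto
  define n where "n = nat \<lceil>a\<rceil>"
  define d where "d = real n - a"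
  have d: "0 \<le> d" "d < 1" unfolding d_def n_def using a(2) by linarith+
  have nk: "n \<ge> k" unfolding n_def using a(1) by linarith
  have an: "a + d = real n" unfolding d_def by simp
  show ?thesis
  proof (intro exI[of _ n] conjI ballI nk)
    fix y assume y: "y \<in> {0..real k}"
    have dy: "d + y \<in> {0..real k + 1}" using d y by auto
    have 1: "P (a + (d + y)) - P a \<ge> (M - 2 * \<epsilon>) * (d + y)" by (rule a(3)[OF dy])
    have 2: "P (a + d) - P a \<le> C * d" using C(2)[of a "a + d"] a(2) d by simp
    have 3: "(M - 2 * \<epsilon>) * d \<ge> - (\<bar>M\<bar> + 2)"
    proof -
      have "\<bar>(M - 2 * \<epsilon>) * d\<bar> = \<bar>M - 2 * \<epsilon>\<bar> * d" using d by (simp add: abs_mult)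
      also have "\<dots> \<le> \<bar>M - 2 * \<epsilon>\<bar> * 1" using d by (intro mult_left_mono) auto
      also have "\<dots> \<le> \<bar>M\<bar> + 2" using e by (simp add: abs_le_iff) linarith
      finally show ?thesis by linarith
    qed
    have 4: "C * d \<le> C" using C(1) d by (simp add: mult_left_le)
    have "P (real n + y) - P (real n) = (P (a + (d + y)) - P a) - (P (a + d) - P a)"
      using an by (simp add: add.assoc[symmetric])
    also have "\<dots> \<ge> (M - 2 * \<epsilon>) * (d + y) - C * d" using 1 2 by linarith
    finally have "P (real n + y) - P (real n) \<ge> (M - 2 * \<epsilon>) * y + (M - 2 * \<epsilon>) * d - C * d"
      by (simp add: distrib_left)
    then show "P (real n + y) - P (real n) \<ge> (M - 2 / (real k + 1)) * y - (C + \<bar>M\<bar> + 2)"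
      using 3 4 e2[symmetric] by simp
  qed
qed


lemma key_lemma:
  assumes f: "f \<in> Linf"
  shows "\<exists>q\<in>Q1. upper_mean f \<le> ereal (q f)"
proof -
  obtain M where M: "upper_mean f = ereal M"
    "\<And>\<theta> \<epsilon> T. \<theta> > 0 \<Longrightarrow> \<epsilon> > 0 \<Longrightarrow> \<exists>x\<ge>T. x \<ge> 0 \<and> prim f (x + \<theta>) - prim f x \<ge> \<theta> * (M - \<epsilon>)"
    using upper_mean_props[OF f] by metis
  obtain C where C: "C \<ge> 0" "\<And>a b. 0 \<le> a \<Longrightarrow> a \<le> b \<Longrightarrow> \<bar>prim f b - prim f a\<bar> \<le> C * (b - a)"
    using Linf_C[OF f] by metis
  define K where "K = C + \<bar>M\<bar> + 2"
  have "\<forall>k. \<exists>n::nat. n \<ge> k \<and> (\<forall>y\<in>{0..real k}. prim f (real n + y) - prim f (real n) \<ge> (M - 2 / (real k + 1)) * y - K)"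
    unfolding K_def using int_seq[OF C M(2)] by blast
  then obtain ns :: "nat \<Rightarrow> nat" where ns: "\<And>k. ns k \<ge> k"
    "\<And>k y. y \<in> {0..real k} \<Longrightarrow> prim f (real (ns k) + y) - prim f (real (ns k)) \<ge> (M - 2 / (real k + 1)) * y - K"
    by metis
  define F0 where "F0 = filtermap ns sequentially"
  have F0nb: "F0 \<noteq> bot" unfolding F0_def by (simp add: filtermap_bot_iff)
  have F0seq: "F0 \<le> sequentially"
  proof (rule filter_leI)
    fix P :: "nat \<Rightarrow> bool" assume "eventually P sequentially"
    then obtain N where N: "\<And>n. n \<ge> N \<Longrightarrow> P n" unfolding eventually_sequentially by blast
    show "eventually P F0" unfolding F0_def eventually_filtermap eventually_sequentially
      using N ns(1) le_trans by blast
  qed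
  obtain \<eta> where \<eta>: "ultrafilter \<eta>" "\<eta> \<le> F0" using ultrafilter_exists[OF F0nb] by blast
  have \<eta>s: "\<eta> \<le> sequentially" using \<eta>(2) F0seq by (rule order_trans)
  obtain U :: "real filter" where Uf: "ultrafilter U" "U \<le> at_top"
    using ultrafilter_exists[of "at_top :: real filter"] by auto
  have qQ: "qfun \<eta> 0 U \<in> Q1" unfolding Q1_def using \<eta>(1) \<eta>s Uf by force
  interpret omgU \<eta> 0 U by unfold_locales (use \<eta> \<eta>s Uf in auto)
  have Jlow: "M * x - K \<le> Jf \<eta> 0 f x" if x: "0 \<le> x" for x
  proof (rule field_le_epsilon)
    fix e :: real assume e: "0 < e"
    define \<delta> where "\<delta> = e / (x + 1)"
    have dp: "\<delta> > 0" unfolding \<delta>_def using e x by simp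
    define k0 where "k0 = nat \<lceil>max x (2 / \<delta>)\<rceil>"
    have k0: "real k0 \<ge> x" "real k0 \<ge> 2 / \<delta>" unfolding k0_def by linarith+
    have evk: "eventually (\<lambda>k. prim f (real (ns k) + x) - prim f (real (ns k)) \<ge> (M - \<delta>) * x - K) sequentially"
      unfolding eventually_sequentially
    proof (intro exI allI impI)
      fix k assume "k0 \<le> k"
      then have kk: "real k \<ge> x" "real k \<ge> 2 / \<delta>" using k0 by auto
      have "2 / (real k + 1) \<le> \<delta>"
      proof -
        have "2 / \<delta> < real k + 1" using kk by simp
        then have "2 < (real k + 1) * \<delta>" using dp by (simp add: divide_less_eq)
        then show ?thesis by (simp add: divide_le_eq mult.commute)
      qed
      then have "(M - \<delta>) * x \<le> (M - 2 / (real k + 1)) * x" using x by (intro mult_right_mono) auto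
      moreover have "(M - 2 / (real k + 1)) * x - K \<le> prim f (real (ns k) + x) - prim f (real (ns k))"
        using ns(2)[of x k] kk x by auto
      ultimately show "(M - \<delta>) * x - K \<le> prim f (real (ns k) + x) - prim f (real (ns k))" by linarith
    qed
    have "eventually (\<lambda>n. prim f (real n + x) - prim f (real n) \<ge> (M - \<delta>) * x - K) F0"
      unfolding F0_def eventually_filtermap using evk .
    then have "eventually (\<lambda>n. prim f (real n + x) - prim f (real n) \<ge> (M - \<delta>) * x - K) \<eta>"
      by (rule filter_leD[OF \<eta>(2)])
    then have "eventually (\<lambda>s. prim f (s + x) - prim f s \<ge> (M - \<delta>) * x - K) Om"
      unfolding omega_filter_def eventually_filtermap by simp
    then have 1: "(M - \<delta>) * x - K \<le> Jf \<eta> 0 f x"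
      using tendsto_lowerbound[OF Jt[OF f x]] Om_nb by blast
    have "\<delta> * x \<le> e"
    proof -
      have "\<delta> * x = e * (x / (x + 1))" unfolding \<delta>_def by simp
      also have "\<dots> \<le> e * 1" using e x by (intro mult_left_mono) auto
      finally show ?thesis by simp
    qed
    then show "M * x - K \<le> Jf \<eta> 0 f x + e" using 1 by (simp add: left_diff_distrib)
  qed
  have "M \<le> qfun \<eta> 0 U f"
  proof -
    have lB: "((\<lambda>x. M - K / x) \<longlongrightarrow> M - 0) at_top"
      by (intro tendsto_diff tendsto_const tendsto_divide_0[OF tendsto_const]
          filterlim_at_top_imp_at_infinity filterlim_ident)
    then have lB: "((\<lambda>x. M - K / x) \<longlongrightarrow> M) U" using tendsto_mono[OF Ua] by simp
    have ev: "eventually (\<lambda>x. M - K / x \<le> (1 / x) * Jf \<eta> 0 f x) U"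
      using U_ev[of 1]
    proof (rule eventually_mono)
      fix x :: real assume x: "1 \<le> x"
      have "(M * x - K) / x \<le> Jf \<eta> 0 f x / x" using Jlow[of x] x by (simp add: divide_right_mono)
      moreover have "(M * x - K) / x = M - K / x" using x by (simp add: field_simps)
      ultimately show "M - K / x \<le> (1 / x) * Jf \<eta> 0 f x" by simp
    qed
    show ?thesis using tendsto_le[OF _ q_tendsto[OF f] lB ev] U_nb by simp
  qed
  then show ?thesis using qQ M(1) by auto
qed


lemma sum_split_nm: fixes n m :: nat shows "(\<Sum>k<n+m. g k) = (\<Sum>k<n. g k) + (\<Sum>j<m. g (n + j))"
  by (induct m) (simp_all add: ac_simps)

lemma M1D:
  assumes "\<phi> \<in> M1"
  shows "\<And>f. f \<notin> Linf \<Longrightarrow> \<phi> f = 0"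
    "\<And>f g. f \<in> Linf \<Longrightarrow> g \<in> Linf \<Longrightarrow> \<phi> (\<lambda>x. f x + g x) = \<phi> f + \<phi> g"
    "\<And>f c. f \<in> Linf \<Longrightarrow> \<phi> (\<lambda>x. c * f x) = c * \<phi> f"
    "\<And>f. f \<in> Linf \<Longrightarrow> (AE x in lebesgue. x \<ge> 0 \<longrightarrow> f x \<ge> 0) \<Longrightarrow> \<phi> f \<ge> 0"
    "\<phi> (\<lambda>_. 1) = 1"
    "\<And>f. f \<in> Linf \<Longrightarrow> ereal (\<phi> f) \<le> upper_mean f"
  using assms unfolding M1_def by auto

lemma M1_const: "\<phi> \<in> M1 \<Longrightarrow> \<phi> (\<lambda>x. c) = c"
  using M1D(3)[of \<phi> "\<lambda>_. 1" c] M1D(5)[of \<phi>] Linf_const[of 1] by simp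

lemma M1_sum:
  assumes \<phi>: "\<phi> \<in> M1" and I: "finite I" and g: "\<And>i. i \<in> I \<Longrightarrow> g i \<in> Linf"
  shows "\<phi> (\<lambda>x. \<Sum>i\<in>I. c i * g i x) = (\<Sum>i\<in>I. c i * \<phi> (g i))"
  using I g
proof (induction I rule: finite_induct)
  case empty then show ?case using M1_const[OF \<phi>, of 0] by simp
next
  case (insert i I)
  have "\<phi> (\<lambda>x. \<Sum>i\<in>insert i I. c i * g i x) = \<phi> (\<lambda>x. c i * g i x + (\<Sum>i\<in>I. c i * g i x))"
    using insert(1,2) by simp
  also have "\<dots> = \<phi> (\<lambda>x. c i * g i x) + \<phi> (\<lambda>x. \<Sum>i\<in>I. c i * g i x)"
    using M1D(2)[OF \<phi> Linf_cmult[OF insert(4)[of i]] Linf_sum[OF insert(1)]] insert(4) by simp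
  also have "\<dots> = c i * \<phi> (g i) + (\<Sum>i\<in>I. c i * \<phi> (g i))"
    using M1D(3)[OF \<phi> insert(4)[of i]] insert by simp
  finally show ?case using insert(1,2) by simp
qed

lemma M1_bound:
  assumes \<phi>: "\<phi> \<in> M1" and f: "f \<in> Linf" and K: "AE x in lebesgue. x \<ge> 0 \<longrightarrow> \<bar>f x\<bar> \<le> K"
  shows "\<bar>\<phi> f\<bar> \<le> K"
proof -
  have l1: "(\<lambda>x. K + (-1) * f x) \<in> Linf" by (intro Linf_add Linf_const Linf_cmult f)
  have a1: "\<phi> (\<lambda>x. K + (-1) * f x) = \<phi> (\<lambda>x. K) + \<phi> (\<lambda>x. (-1) * f x)"
    by (rule M1D(2)[OF \<phi> Linf_const Linf_cmult[OF f]])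
  have a2: "\<phi> (\<lambda>x. (-1) * f x) = (-1) * \<phi> f" by (rule M1D(3)[OF \<phi> f])
  have a3: "\<phi> (\<lambda>x. K) = K" by (rule M1_const[OF \<phi>])
  have "\<phi> (\<lambda>x. K + (-1) * f x) = K - \<phi> f" using a1 a2 a3 by linarith
  moreover have "\<phi> (\<lambda>x. K + (-1) * f x) \<ge> 0"
    by (rule M1D(4)[OF \<phi> l1]) (use K in \<open>auto elim!: eventually_mono\<close>)
  moreover have l2: "(\<lambda>x. K + f x) \<in> Linf" by (intro Linf_add Linf_const f)
  have "\<phi> (\<lambda>x. K + f x) = \<phi> (\<lambda>x. K) + \<phi> f" by (rule M1D(2)[OF \<phi> Linf_const f])
  then have "\<phi> (\<lambda>x. K + f x) = K + \<phi> f" using M1_const[OF \<phi>] by simp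
  moreover have "\<phi> (\<lambda>x. K + f x) \<ge> 0"
    by (rule M1D(4)[OF \<phi> l2]) (use K in \<open>auto elim!: eventually_mono\<close>)
  ultimately show ?thesis by linarith
qed

lemma M1_upper_real:
  assumes "\<phi> \<in> M1" "f \<in> Linf" "upper_mean f = ereal M"
  shows "\<phi> f \<le> M"
  using M1D(6)[OF assms(1,2)] assms(3) by simp

lemma conv_M1: "conv_comb M1 \<subseteq> M1"
proof
  fix \<psi> assume "\<psi> \<in> conv_comb M1"
  then obtain n :: nat and c \<phi>s where \<psi>: "\<psi> = (\<lambda>f. \<Sum>i<n. c i * \<phi>s i f)"
    and cph: "\<forall>i<n. 0 \<le> c i \<and> \<phi>s i \<in> M1" and s1: "(\<Sum>i<n. c i) = 1"
    unfolding conv_comb_def mem_Collect_eq by blast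
  have c: "\<And>i. i < n \<Longrightarrow> 0 \<le> c i" and ph: "\<And>i. i < n \<Longrightarrow> \<phi>s i \<in> M1" using cph by auto
  show "\<psi> \<in> M1"
    unfolding M1_def
  proof (intro CollectI conjI allI impI ballI)
    fix f :: "real \<Rightarrow> real" assume "f \<notin> Linf"
    then show "\<psi> f = 0" unfolding \<psi> using M1D(1)[OF ph] by simp
  next
    fix f g :: "real \<Rightarrow> real" assume f: "f \<in> Linf" and g: "g \<in> Linf"
    show "\<psi> (\<lambda>x. f x + g x) = \<psi> f + \<psi> g" unfolding \<psi>
    proof -
      have "\<phi>s i (\<lambda>x. f x + g x) = \<phi>s i f + \<phi>s i g" if "i < n" for i using M1D(2)[OF ph[OF that] f g] .
      then have "(\<Sum>i<n. c i * \<phi>s i (\<lambda>x. f x + g x)) = (\<Sum>i<n. c i * \<phi>s i f + c i * \<phi>s i g)"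
        by (intro sum.cong) (auto simp: distrib_left)
      then show "(\<lambda>f. \<Sum>i<n. c i * \<phi>s i f) (\<lambda>x. f x + g x) = (\<lambda>f. \<Sum>i<n. c i * \<phi>s i f) f + (\<lambda>f. \<Sum>i<n. c i * \<phi>s i f) g"
        by (simp add: sum.distrib)
    qed
  next
    fix f :: "real \<Rightarrow> real" and a :: real assume f: "f \<in> Linf"
    show "\<psi> (\<lambda>x. a * f x) = a * \<psi> f" unfolding \<psi>
    proof -
      have "\<phi>s i (\<lambda>x. a * f x) = a * \<phi>s i f" if "i < n" for i using M1D(3)[OF ph[OF that] f] .
      then have "(\<Sum>i<n. c i * \<phi>s i (\<lambda>x. a * f x)) = (\<Sum>i<n. a * (c i * \<phi>s i f))"
        by (intro sum.cong) auto
      then show "(\<lambda>f. \<Sum>i<n. c i * \<phi>s i f) (\<lambda>x. a * f x) = a * (\<lambda>f. \<Sum>i<n. c i * \<phi>s i f) f"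
        by (simp add: sum_distrib_left)
    qed
  next
    fix f :: "real \<Rightarrow> real" assume f: "f \<in> Linf" and pos: "AE x in lebesgue. 0 \<le> x \<longrightarrow> 0 \<le> f x"
    have "0 \<le> \<phi>s i f" if "i < n" for i using M1D(4)[OF ph[OF that] f pos] .
    then show "0 \<le> \<psi> f" unfolding \<psi> using c by (auto intro!: sum_nonneg)
  next
    show "\<psi> (\<lambda>_. 1) = 1" unfolding \<psi> using M1D(5)[OF ph] s1 by simp
  next
    fix f :: "real \<Rightarrow> real" assume f: "f \<in> Linf"
    obtain M where M: "upper_mean f = ereal M" using upper_mean_props[OF f] by metis
    have "(\<Sum>i<n. c i * \<phi>s i f) \<le> (\<Sum>i<n. c i * M)"
    proof (rule sum_mono)
      fix i assume "i \<in> {..<n}"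
      then have i: "i < n" by simp
      show "c i * \<phi>s i f \<le> c i * M" using M1_upper_real[OF ph[OF i] f M] c[OF i] by (intro mult_left_mono) auto
    qed
    also have "\<dots> = M" using s1 by (simp add: sum_distrib_right[symmetric])
    finally show "ereal (\<psi> f) \<le> upper_mean f" unfolding \<psi> M by simp
  qed
qed

lemma conv_mono: "S \<subseteq> T \<Longrightarrow> conv_comb S \<subseteq> conv_comb T"
  unfolding conv_comb_def by blast

lemma in_conv: assumes "q \<in> S" shows "q \<in> conv_comb S"
proof -
  have "q = (\<lambda>f. \<Sum>i<(1::nat). (\<lambda>_. 1::real) i * (\<lambda>_. q) i f)" by simp
  moreover have "(\<forall>i<(1::nat). 0 \<le> (\<lambda>_. 1::real) i \<and> (\<lambda>_. q) i \<in> S) \<and> (\<Sum>i<(1::nat). (\<lambda>_. 1::real) i) = 1"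
    using assms by simp
  ultimately show ?thesis unfolding conv_comb_def mem_Collect_eq by (intro exI conjI) (assumption | simp)+
qed

lemma conv_convex:
  assumes a: "\<psi>0 \<in> conv_comb S" and b: "\<psi> \<in> conv_comb S" and l: "0 \<le> l" "l \<le> 1"
  shows "(\<lambda>f. (1 - l) * \<psi>0 f + l * \<psi> f) \<in> conv_comb S"
proof -
  obtain n :: nat and a \<phi>a where A: "\<psi>0 = (\<lambda>f. \<Sum>i<n. a i * \<phi>a i f)" "\<And>i. i < n \<Longrightarrow> 0 \<le> a i \<and> \<phi>a i \<in> S" "(\<Sum>i<n. a i) = 1"
    using a unfolding conv_comb_def by blast
  obtain m :: nat and b \<phi>b where B: "\<psi> = (\<lambda>f. \<Sum>i<m. b i * \<phi>b i f)" "\<And>i. i < m \<Longrightarrow> 0 \<le> b i \<and> \<phi>b i \<in> S" "(\<Sum>i<m. b i) = 1"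
    using b unfolding conv_comb_def by blast
  define c where "c k = (if k < n then (1 - l) * a k else l * b (k - n))" for k
  define \<phi>c where "\<phi>c k = (if k < n then \<phi>a k else \<phi>b (k - n))" for k
  have 1: "(\<Sum>k<n+m. c k * \<phi>c k f) = (1 - l) * \<psi>0 f + l * \<psi> f" for f
    unfolding sum_split_nm A(1) B(1) c_def \<phi>c_def by (simp add: sum_distrib_left mult.assoc)
  have 2: "(\<Sum>k<n+m. c k) = 1"
    unfolding sum_split_nm c_def using A(3) B(3) by (simp add: sum_distrib_left[symmetric])
  have 3: "\<forall>k<n+m. 0 \<le> c k \<and> \<phi>c k \<in> S"
    using A(2) B(2) l unfolding c_def \<phi>c_def by auto
  show ?thesis unfolding conv_comb_def
    by (rule CollectI, rule exI[of _ "n+m"], rule exI[of _ c], rule exI[of _ \<phi>c]) (use 1 2 3 in auto)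
qed

lemma small_zero: assumes "\<And>e. e > 0 \<Longrightarrow> \<bar>a\<bar> < e" shows "(a::real) = 0"
proof (rule ccontr)
  assume "a \<noteq> 0"
  then have "\<bar>a\<bar> > 0" by simp
  then show False using assms[of "\<bar>a\<bar>"] by simp
qed

lemma closure_M1:
  assumes S: "S \<subseteq> M1"
  shows "wstar_closure S \<subseteq> M1"
proof
  fix \<psi> assume \<psi>: "\<psi> \<in> wstar_closure S"
  have van: "\<And>f. f \<notin> Linf \<Longrightarrow> \<psi> f = 0" using \<psi> unfolding wstar_closure_def by auto
  have ap: "\<exists>\<phi>\<in>S. \<forall>f\<in>F. \<bar>\<phi> f - \<psi> f\<bar> < e" if "finite F" "F \<subseteq> Linf" "e > 0" for F e
    using \<psi> that unfolding wstar_closure_def by auto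
  show "\<psi> \<in> M1"
    unfolding M1_def
  proof (intro CollectI conjI allI impI ballI)
    fix f :: "real \<Rightarrow> real" assume "f \<notin> Linf" then show "\<psi> f = 0" by (rule van)
  next
    fix f g :: "real \<Rightarrow> real" assume f: "f \<in> Linf" and g: "g \<in> Linf"
    have "\<psi> (\<lambda>x. f x + g x) - (\<psi> f + \<psi> g) = 0"
    proof (rule small_zero)
      fix e :: real assume e: "e > 0"
      obtain \<phi> where \<phi>: "\<phi> \<in> S" "\<forall>h\<in>{f, g, \<lambda>x. f x + g x}. \<bar>\<phi> h - \<psi> h\<bar> < e / 3"
        using ap[of "{f, g, \<lambda>x. f x + g x}" "e / 3"] f g Linf_add[OF f g] e by auto
      have eq: "\<phi> (\<lambda>x. f x + g x) = \<phi> f + \<phi> g" using M1D(2)[OF _ f g] \<phi>(1) S by blast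
      have h1: "\<bar>\<phi> f - \<psi> f\<bar> < e / 3" and h2: "\<bar>\<phi> g - \<psi> g\<bar> < e / 3"
        and h3: "\<bar>\<phi> (\<lambda>x. f x + g x) - \<psi> (\<lambda>x. f x + g x)\<bar> < e / 3" using \<phi>(2) by auto
      show "\<bar>\<psi> (\<lambda>x. f x + g x) - (\<psi> f + \<psi> g)\<bar> < e" using h1 h2 h3 eq by linarith
    qed
    then show "\<psi> (\<lambda>x. f x + g x) = \<psi> f + \<psi> g" by simp
  next
    fix f :: "real \<Rightarrow> real" and c :: real assume f: "f \<in> Linf"
    have "\<psi> (\<lambda>x. c * f x) - c * \<psi> f = 0"
    proof (rule small_zero)
      fix e :: real assume e: "e > 0"
      define e' where "e' = e / (1 + \<bar>c\<bar>)"
      have e': "e' > 0" "e' * (1 + \<bar>c\<bar>) = e" unfolding e'_def using e by (auto simp: field_simps)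
      obtain \<phi> where \<phi>: "\<phi> \<in> S" "\<forall>h\<in>{f, \<lambda>x. c * f x}. \<bar>\<phi> h - \<psi> h\<bar> < e'"
        using ap[of "{f, \<lambda>x. c * f x}" e'] f Linf_cmult[OF f] e' by auto
      have "\<phi> (\<lambda>x. c * f x) = c * \<phi> f" using M1D(3)[OF _ f] \<phi>(1) S by blast
      have "\<bar>c * \<phi> f - c * \<psi> f\<bar> = \<bar>c\<bar> * \<bar>\<phi> f - \<psi> f\<bar>" by (simp add: abs_mult right_diff_distrib[symmetric])
      also have "\<dots> \<le> \<bar>c\<bar> * e'" using \<phi>(2) by (intro mult_left_mono) auto
      finally have "\<bar>c * \<phi> f - c * \<psi> f\<bar> \<le> \<bar>c\<bar> * e'" .
      then have "\<bar>\<psi> (\<lambda>x. c * f x) - c * \<psi> f\<bar> < e' + \<bar>c\<bar> * e'"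
        using \<phi>(2) \<open>\<phi> (\<lambda>x. c * f x) = c * \<phi> f\<close> by auto
      also have "\<dots> = e" using e'(2) by (simp add: algebra_simps)
      finally show "\<bar>\<psi> (\<lambda>x. c * f x) - c * \<psi> f\<bar> < e" .
    qed
    then show "\<psi> (\<lambda>x. c * f x) = c * \<psi> f" by simp
  next
    fix f :: "real \<Rightarrow> real" assume f: "f \<in> Linf" and pos: "AE x in lebesgue. 0 \<le> x \<longrightarrow> 0 \<le> f x"
    show "0 \<le> \<psi> f"
    proof (rule field_le_epsilon)
      fix e :: real assume e: "0 < e"
      obtain \<phi> where \<phi>: "\<phi> \<in> S" "\<forall>h\<in>{f}. \<bar>\<phi> h - \<psi> h\<bar> < e" using ap[of "{f}" e] f e by auto
      have "0 \<le> \<phi> f" using M1D(4)[OF _ f pos] \<phi>(1) S by blast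
      then show "0 \<le> \<psi> f + e" using \<phi>(2) by auto
    qed
  next
    have "\<psi> (\<lambda>_. 1) - 1 = 0"
    proof (rule small_zero)
      fix e :: real assume e: "0 < e"
      obtain \<phi> where \<phi>: "\<phi> \<in> S" "\<forall>h\<in>{\<lambda>_. 1}. \<bar>\<phi> h - \<psi> h\<bar> < e" using ap[of "{\<lambda>_. 1}" e] Linf_const e by auto
      have "\<phi> (\<lambda>_. 1) = 1" using M1D(5) \<phi>(1) S by blast
      then show "\<bar>\<psi> (\<lambda>_. 1) - 1\<bar> < e" using \<phi>(2) by auto
    qed
    then show "\<psi> (\<lambda>_. 1) = 1" by simp
  next
    fix f :: "real \<Rightarrow> real" assume f: "f \<in> Linf"
    obtain M where M: "upper_mean f = ereal M" using upper_mean_props[OF f] by metis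
    have "\<psi> f \<le> M"
    proof (rule field_le_epsilon)
      fix e :: real assume e: "0 < e"
      obtain \<phi> where \<phi>: "\<phi> \<in> S" "\<forall>h\<in>{f}. \<bar>\<phi> h - \<psi> h\<bar> < e" using ap[of "{f}" e] f e by auto
      have "\<phi> f \<le> M" using M1_upper_real[OF _ f M] \<phi>(1) S by blast
      then show "\<psi> f \<le> M + e" using \<phi>(2) by auto
    qed
    then show "ereal (\<psi> f) \<le> upper_mean f" using M by simp
  qed
qed


lemma convQ1_M1: "conv_comb Q1 \<subseteq> M1"
  using conv_M1 conv_mono[OF Q1_M1] by blast

lemma M1_sub_closure:
  assumes \<phi>: "\<phi> \<in> M1"
  shows "\<phi> \<in> wstar_closure (conv_comb Q1)"
  unfolding wstar_closure_def
proof (intro CollectI conjI allI impI)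
  fix f :: "real \<Rightarrow> real" assume "f \<notin> Linf" then show "\<phi> f = 0" by (rule M1D(1)[OF \<phi>])
next
  fix Fs :: "(real \<Rightarrow> real) set" and \<epsilon> :: real
  assume FsA: "finite Fs \<and> Fs \<subseteq> Linf" and e: "0 < \<epsilon>"
  then have Fs: "finite Fs" "Fs \<subseteq> Linf" by auto
  show "\<exists>\<psi>\<in>conv_comb Q1. \<forall>f\<in>Fs. \<bar>\<psi> f - \<phi> f\<bar> < \<epsilon>"
  proof (rule ccontr)
    assume H: "\<not> ?thesis"
    define Cv where "Cv = conv_comb Q1"
    have CvM1: "Cv \<subseteq> M1" unfolding Cv_def by (rule convQ1_M1)
    define dist2 where "dist2 \<psi> = (\<Sum>f\<in>Fs. (\<psi> f - \<phi> f)\<^sup>2)" for \<psi> :: "(real \<Rightarrow> real) \<Rightarrow> real"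
    have dlow: "\<epsilon>\<^sup>2 \<le> dist2 \<psi>" if psiCv: "\<psi> \<in> Cv" for \<psi>
    proof -
      have "\<exists>f\<in>Fs. \<epsilon> \<le> \<bar>\<psi> f - \<phi> f\<bar>" using H psiCv unfolding Cv_def by (auto simp: not_less)
      then obtain f where f: "f \<in> Fs" "\<epsilon> \<le> \<bar>\<psi> f - \<phi> f\<bar>" by blast
      have "\<epsilon>\<^sup>2 \<le> \<bar>\<psi> f - \<phi> f\<bar>\<^sup>2" using f(2) e by (intro power_mono) auto
      also have "\<dots> = (\<psi> f - \<phi> f)\<^sup>2" by simp
      also have "\<dots> \<le> dist2 \<psi>" unfolding dist2_def by (rule member_le_sum) (use f Fs in auto)
      finally show ?thesis .
    qed
    obtain q0 where "q0 \<in> Q1" using key_lemma[OF Linf_const[of 0]] by blast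
    then have Cvne: "Cv \<noteq> {}" unfolding Cv_def using in_conv by blast
    define d where "d = Inf (dist2 ` Cv)"
    have bdd: "bdd_below (dist2 ` Cv)" using dlow by (intro bdd_belowI[of _ "\<epsilon>\<^sup>2"]) auto
    have dle: "d \<le> dist2 \<psi>" if "\<psi> \<in> Cv" for \<psi> unfolding d_def using bdd that by (intro cInf_lower) auto
    have dge: "\<epsilon>\<^sup>2 \<le> d" unfolding d_def using Cvne dlow by (intro cInf_greatest) auto
    have d0: "d > 0" using dge e by (smt (verit) zero_less_power)
    have "\<forall>f\<in>Fs. \<exists>K. AE x in lebesgue. x \<ge> 0 \<longrightarrow> \<bar>f x\<bar> \<le> K" using Fs(2) unfolding Linf_def by blast
    then obtain Cf where Cf: "\<And>f. f \<in> Fs \<Longrightarrow> AE x in lebesgue. x \<ge> 0 \<longrightarrow> \<bar>f x\<bar> \<le> Cf f" by metis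
    have vb: "\<bar>\<psi> f\<bar> \<le> Cf f" if "\<psi> \<in> Cv" "f \<in> Fs" for \<psi> f
      using M1_bound[OF _ _ Cf[OF that(2)]] CvM1 that Fs(2) by blast
    define B where "B = (\<Sum>f\<in>Fs. (2 * Cf f)\<^sup>2)"
    have B0: "B \<ge> 0" unfolding B_def by (intro sum_nonneg) auto
    have Bb: "(\<Sum>f\<in>Fs. (\<psi> f - \<psi>0 f)\<^sup>2) \<le> B" if "\<psi> \<in> Cv" "\<psi>0 \<in> Cv" for \<psi> \<psi>0
      unfolding B_def
    proof (rule sum_mono)
      fix f assume f: "f \<in> Fs"
      have "\<bar>\<psi> f - \<psi>0 f\<bar> \<le> 2 * Cf f" using vb[OF that(1) f] vb[OF that(2) f] by linarith
      then have "\<bar>\<psi> f - \<psi>0 f\<bar>\<^sup>2 \<le> (2 * Cf f)\<^sup>2" by (intro power_mono) auto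
      then show "(\<psi> f - \<psi>0 f)\<^sup>2 \<le> (2 * Cf f)\<^sup>2" by simp
    qed
    define l where "l = min 1 (d / (2 * B + 1))"
    have l0: "0 < l" "l \<le> 1" unfolding l_def using d0 B0 by auto
    have lB: "l * B \<le> d / 2"
    proof -
      have "l * B \<le> d / (2 * B + 1) * B" unfolding l_def using B0 by (intro mult_right_mono) auto
      also have "\<dots> = d * (B / (2 * B + 1))" by simp
      also have "\<dots> \<le> d * (1 / 2)" using d0 B0 by (intro mult_left_mono) (auto simp: field_simps)
      finally show ?thesis by simp
    qed
    define \<delta> where "\<delta> = l * d / 2"
    have \<delta>0: "\<delta> > 0" unfolding \<delta>_def using l0 d0 by simp
    have "\<exists>x\<in>dist2 ` Cv. x < d + \<delta>" unfolding d_def by (rule cInf_lessD) (use Cvne \<delta>0 in auto)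
    then obtain \<psi>0 where \<psi>0: "\<psi>0 \<in> Cv" "dist2 \<psi>0 < d + \<delta>" by auto
    define c where "c f = \<phi> f - \<psi>0 f" for f
    have sep: "(\<Sum>f\<in>Fs. c f * (\<psi> f - \<phi> f)) < 0" if \<psi>: "\<psi> \<in> Cv" for \<psi>
    proof -
      define \<psi>l where "\<psi>l = (\<lambda>f. (1 - l) * \<psi>0 f + l * \<psi> f)"
      have "\<psi>l \<in> Cv" using conv_convex[of \<psi>0 Q1 \<psi> l] \<psi>0(1) \<psi> l0 unfolding Cv_def \<psi>l_def by auto
      then have a: "d \<le> dist2 \<psi>l" by (rule dle)
      define S where "S = (\<Sum>f\<in>Fs. (\<psi>0 f - \<phi> f) * (\<psi> f - \<psi>0 f))"
      define V where "V = (\<Sum>f\<in>Fs. (\<psi> f - \<psi>0 f)\<^sup>2)"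
      define D0 where "D0 = dist2 \<psi>0"
      have pt: "((1 - l) * \<psi>0 f + l * \<psi> f - \<phi> f)\<^sup>2 =
          (\<psi>0 f - \<phi> f)\<^sup>2 + 2 * l * ((\<psi>0 f - \<phi> f) * (\<psi> f - \<psi>0 f)) + l\<^sup>2 * (\<psi> f - \<psi>0 f)\<^sup>2" for f
        by (simp add: power2_eq_square algebra_simps)
      have "dist2 \<psi>l = (\<Sum>f\<in>Fs. (\<psi>0 f - \<phi> f)\<^sup>2 + 2 * l * ((\<psi>0 f - \<phi> f) * (\<psi> f - \<psi>0 f)) + l\<^sup>2 * (\<psi> f - \<psi>0 f)\<^sup>2)"
        unfolding dist2_def \<psi>l_def using pt by simp
      also have "\<dots> = D0 + 2 * l * S + l\<^sup>2 * V"
        unfolding D0_def dist2_def S_def V_def by (simp add: sum.distrib sum_distrib_left)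
      finally have expand: "dist2 \<psi>l = D0 + 2 * l * S + l\<^sup>2 * V" .
      have VB: "V \<le> B" unfolding V_def by (rule Bb[OF \<psi> \<psi>0(1)])
      have c1: "l\<^sup>2 * V \<le> l * d / 2"
      proof -
        have "l\<^sup>2 * V \<le> l\<^sup>2 * B" using VB by (intro mult_left_mono) auto
        also have "\<dots> = l * (l * B)" by (simp add: power2_eq_square)
        also have "\<dots> \<le> l * (d / 2)" using lB l0 by (intro mult_left_mono) auto
        finally show ?thesis by simp
      qed
      have c2: "D0 < d + l * d / 2" using \<psi>0(2) unfolding D0_def \<delta>_def .
      have "2 * l * S > - (l * d)" using a expand c1 c2 by linarith
      then have "0 < l * (2 * S + d)" by (simp add: algebra_simps)
      then have Sgt: "2 * S + d > 0" using l0 by (simp add: zero_less_mult_iff)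
      have D0ge: "d \<le> D0" unfolding D0_def by (rule dle[OF \<psi>0(1)])
      have "(\<Sum>f\<in>Fs. c f * (\<psi> f - \<phi> f)) = (\<Sum>f\<in>Fs. - ((\<psi>0 f - \<phi> f) * (\<psi> f - \<psi>0 f)) - (\<psi>0 f - \<phi> f)\<^sup>2)"
        by (rule sum.cong) (auto simp: c_def power2_eq_square algebra_simps)
      also have "\<dots> = - S - D0" unfolding S_def D0_def dist2_def by (simp add: sum_subtractf sum_negf)
      finally show ?thesis using Sgt D0ge d0 by linarith
    qed
    define gs where "gs = (\<lambda>x. \<Sum>f\<in>Fs. c f * f x)"
    have gsL: "gs \<in> Linf" unfolding gs_def using Linf_sum[OF Fs(1), of "\<lambda>f. f" c] Fs(2) by auto
    obtain q where q: "q \<in> Q1" "upper_mean gs \<le> ereal (q gs)" using key_lemma[OF gsL] by blast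
    have qCv: "q \<in> Cv" unfolding Cv_def using in_conv[OF q(1)] .
    have qM: "q \<in> M1" using Q1_M1 q(1) by blast
    have "ereal (\<phi> gs) \<le> upper_mean gs" by (rule M1D(6)[OF \<phi> gsL])
    then have "ereal (\<phi> gs) \<le> ereal (q gs)" using q(2) by (rule order_trans)
    then have le: "\<phi> gs \<le> q gs" by simp
    have qgs: "q gs = (\<Sum>f\<in>Fs. c f * q f)" unfolding gs_def using M1_sum[OF qM Fs(1), of "\<lambda>f. f" c] Fs(2) by auto
    have pgs: "\<phi> gs = (\<Sum>f\<in>Fs. c f * \<phi> f)" unfolding gs_def using M1_sum[OF \<phi> Fs(1), of "\<lambda>f. f" c] Fs(2) by auto
    have "q gs - \<phi> gs = (\<Sum>f\<in>Fs. c f * (q f - \<phi> f))"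
      unfolding qgs pgs by (simp add: sum_subtractf right_diff_distrib)
    also have "\<dots> < 0" by (rule sep[OF qCv])
    finally show False using le by simp
  qed
qed

theorem theorem3p8:
  shows "M1 = wstar_closure (conv_comb Q1)"
proof
  show "M1 \<subseteq> wstar_closure (conv_comb Q1)" using M1_sub_closure by blast
  show "wstar_closure (conv_comb Q1) \<subseteq> M1" by (rule closure_M1[OF convQ1_M1])
qed


end
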